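(* Assume $\Gamma\vdash t:\tau$ and let $N\in\mathbb{N}$ with $N\ge|\mathrm{FV}(t)|$. If $t\to t'$, then $$\pi(t)(N)+\mathrm{len}(t)>\pi(t')(N)+\mathrm{len}(t').$$ In particular, every reduction sequence $t=t_0\to t_1\to\cdots\to t_k$ starting from $t$ has length $k\le\pi(t)(|\mathrm{FV}(t)|)+\mathrm{len}(t)$.
   Context: Types: $\rho,\tau::=\Diamond\mid\mathbf{B}\mid\tau\multimap\rho\mid\tau\otimes\rho\mid\tau\times\rho\mid\mathbf{L}(\tau)$. Raw terms: $r,s,t::=x^\tau\mid c\mid\lambda x^\tau.\,t\mid\langle t,s\rangle\mid ts\mid\{t\}$, where each variable $x^\tau$ carries a type (infinitely many variables of each type), application associates to the left, terms are identified up to renaming of bound variables ($\lambda$ is the only binder), and the constants $c$ with their types are $\mathsf{tt},\mathsf{ff}:\mathbf{B}$; $\mathsf{nil}_\tau:\mathbf{L}(\tau)$; $\mathsf{cons}_\tau:\Diamond\multimap\tau\multimap\mathbf{L}(\tau)\multimap\mathbf{L}(\tau)$; $\otimes_{\tau,\rho}:\tau\multimap\rho\multimap\tau\otimes\rho$. A context is a finite set of typed variables; $\Gamma_1,\Gamma_2$ denotes $\Gamma_1\cup\Gamma_2$ and presupposes $\Gamma_1\cap\Gamma_2=\emptyset$; $x^\tau$ also denotes $\{x^\tau\}$. The relation $\Gamma\vdash t:\tau$ is inductively defined by: (Var) $\Gamma,x^\tau\vdash x:\tau$; (Const) $\Gamma\vdash c:\tau$ for a constant $c$ of type $\tau$;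 ($\multimap^+$) from $\Gamma\cup\{x^\tau\}\vdash t:\rho$ infer $\Gamma\vdash\lambda x^\tau.t:\tau\multimap\rho$; ($\multimap^-$) from $\Gamma_1\vdash t:\tau\multimap\rho$ and $\Gamma_2\vdash s:\tau$ infer $\Gamma_1,\Gamma_2\vdash ts:\rho$; ($\times^+$) from $\Gamma\vdash t:\tau$ and $\Gamma\vdash s:\rho$ infer $\Gamma\vdash\langle t,s\rangle:\tau\times\rho$; ($\times^-_1$) from $\Gamma\vdash t:\tau\times\rho$ infer $\Gamma\vdash t\,\mathsf{tt}:\tau$; ($\times^-_0$) from $\Gamma\vdash t:\tau\times\rho$ infer $\Gamma\vdash t\,\mathsf{ff}:\rho$; ($\mathbf{B}^-$) from $\Gamma_1\vdash t:\mathbf{B}$, $\Gamma_2\vdash s:\tau$, $\Gamma_2\vdash r:\tau$ infer $\Gamma_1,\Gamma_2\vdash t\langle s,r\rangle:\tau$; ($\otimes^-$) from $\Gamma_1\vdash t:\tau\otimes\rho$ and $\Gamma_2,x^\tau,y^\rho\vdash s:\sigma$ infer $\Gamma_1,\Gamma_2\vdash t(\lambda x^\tau.\lambda y^\rho.s):\sigma$; ($\mathbf{L}^-$) from $\Gamma\vdash t:\mathbf{L}(\tau)$ and $\emptyset\vdash s:\Diamond\multimap\tau\multimap\rho\multimap\rho$ infer $\Gamma\vdash t\{s\}:\rho\multimap\rho$. $\mathrm{FV}(t)$ is the set of free variables of $t$. Lists: a list with $n$ entries ($n\ge0$) is a term $\mathsf{cons}_\tau d_1a_1(\mathsf{cons}_\tau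 d_2a_2(\cdots(\mathsf{cons}_\tau d_na_n\,\mathsf{nil}_\tau)\cdots))$ where the $d_i$ are arbitrary terms of type $\Diamond$ and the $a_i$ arbitrary terms of type $\tau$ (for $n=0$ this is $\mathsf{nil}_\tau$). Conversions $\mapsto$: $(\lambda x.t)s\mapsto t[s/x]$; $\langle t,s\rangle\mathsf{tt}\mapsto t$; $\langle t,s\rangle\mathsf{ff}\mapsto s$; $\mathsf{tt}\langle t,s\rangle\mapsto t$; $\mathsf{ff}\langle t,s\rangle\mapsto s$; $\otimes_{\tau,\rho}ts(\lambda x^\tau.\lambda y^\rho.r)\mapsto r[t,s/x,y]$ (simultaneous substitution); $\mathsf{nil}_\tau\{t\}s\mapsto s$; $\mathsf{cons}_\tau d\,a\,\ell\{t\}s\mapsto t\,d\,a\,(\ell\{t\}s)$ provided $\ell$ is a list. The reduction relation $\to$ is inductively defined by: if $t\mapsto t'$ then $t\to t'$; if $t\to t'$ then $ts\to t's$; if $s\to s'$ then $ts\to ts'$ (no reduction under $\lambda$, inside pairs, or inside braces). Length: $\mathrm{len}(c)=\mathrm{len}(x)=1$; $\mathrm{len}(ts)=\mathrm{len}(t)+\mathrm{len}(s)$; $\mathrm{len}(\lambda x.s)=\mathrm{len}(s)+1$; $\mathrm{len}(\langle t,s\rangle)=\max(\mathrm{len}(t),\mathrm{len}(s))+1$; $\mathrm{len}(\{t\})=0$. $\mathbb{N}^{\mathrm{poly}}$ is the set of functions $\mathbb{N}\to\mathbb{N}$ pointwise bounded by a polynomial; $X$ is the identity, $X_n(m)=\min(n,m)$,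 natural numbers are identified with constant functions, $+,\cdot,\sup$ are pointwise sum, product and maximum. For every raw term $t$ define $\pi(t)\in\mathbb{N}^{\mathrm{poly}}$ by recursion: $\pi(x)=\pi(c)=0$; $\pi(ts)=\pi(t)+X_n\cdot\pi(h)+X_n\cdot\mathrm{len}(h)$ if $t$ is a list with $n$ entries and $s=\{h\}$, and $\pi(ts)=\pi(t)+\pi(s)$ otherwise; $\pi(\lambda x.t)=\pi(t)$; $\pi(\langle t,s\rangle)=\sup(\pi(t),\pi(s))$; $\pi(\{h\})=X\cdot\pi(h)+X\cdot\mathrm{len}(h)$. *)

theory Defs
  imports Main
begin

datatype ty = Dia | BoolT | Lolli ty ty | Tensor ty ty | With ty ty | ListT ty

type_synonym var = "nat \<times> ty"

datatype const = TT | FF | NilC ty | ConsC ty | TensC ty ty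

fun ctype :: "const \<Rightarrow> ty" where
  "ctype TT = BoolT"
| "ctype FF = BoolT"
| "ctype (NilC \<tau>) = ListT \<tau>"
| "ctype (ConsC \<tau>) = Lolli Dia (Lolli \<tau> (Lolli (ListT \<tau>) (ListT \<tau>)))"
| "ctype (TensC \<tau> \<rho>) = Lolli \<tau> (Lolli \<rho> (Tensor \<tau> \<rho>))"

text \<open>Raw terms modulo alpha-renaming, in locally nameless representation:
  free variables are named typed variables, bound variables are de Bruijn indices.
  \<open>Lam \<tau> b\<close> is \<open>\<lambda>x\<^sup>\<tau>. b\<close>, \<open>Pair\<close> is \<open>\<langle>_,_\<rangle>\<close>, \<open>Brace\<close> is \<open>{_}\<close>.\<close>
datatype trm = FVar var | BVar nat | Const const | Lam ty trm | Pair trm trm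
  | App trm trm | Brace trm

fun fv :: "trm \<Rightarrow> var set" where
  "fv (FVar x) = {x}"
| "fv (BVar i) = {}"
| "fv (Const c) = {}"
| "fv (Lam \<tau> b) = fv b"
| "fv (Pair t s) = fv t \<union> fv s"
| "fv (App t s) = fv t \<union> fv s"
| "fv (Brace t) = fv t"

fun opn :: "nat \<Rightarrow> trm \<Rightarrow> trm \<Rightarrow> trm" where
  "opn k u (FVar x) = FVar x"
| "opn k u (BVar i) = (if i = k then u else BVar i)"
| "opn k u (Const c) = Const c"
| "opn k u (Lam \<tau> b) = Lam \<tau> (opn (Suc k) u b)"
| "opn k u (Pair t s) = Pair (opn k u t) (opn k u s)"
| "opn k u (App t s) = App (opn k u t) (opn k u s)"
| "opn k u (Brace t) = Brace (opn k u t)"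

text \<open>Simultaneous opening of a body under two binders \<open>\<lambda>x.\<lambda>y.\<close>:
  index \<open>k+1\<close> (= x) becomes \<open>u\<close>, index \<open>k\<close> (= y) becomes \<open>v\<close>.\<close>
fun opn2 :: "nat \<Rightarrow> trm \<Rightarrow> trm \<Rightarrow> trm \<Rightarrow> trm" where
  "opn2 k u v (FVar x) = FVar x"
| "opn2 k u v (BVar i) = (if i = k then v else if i = Suc k then u else BVar i)"
| "opn2 k u v (Const c) = Const c"
| "opn2 k u v (Lam \<tau> b) = Lam \<tau> (opn2 (Suc k) u v b)"
| "opn2 k u v (Pair t s) = Pair (opn2 k u v t) (opn2 k u v s)"
| "opn2 k u v (App t s) = App (opn2 k u v t) (opn2 k u v s)"
| "opn2 k u v (Brace t) = Brace (opn2 k u v t)"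

inductive typed :: "var set \<Rightarrow> trm \<Rightarrow> ty \<Rightarrow> bool" where
  Var: "finite \<Gamma> \<Longrightarrow> x \<in> \<Gamma> \<Longrightarrow> typed \<Gamma> (FVar x) (snd x)"
| Cst: "finite \<Gamma> \<Longrightarrow> typed \<Gamma> (Const c) (ctype c)"
| LolliI: "x \<notin> fv b \<Longrightarrow> snd x = \<tau> \<Longrightarrow> typed (\<Gamma> \<union> {x}) (opn 0 (FVar x) b) \<rho>
           \<Longrightarrow> typed \<Gamma> (Lam \<tau> b) (Lolli \<tau> \<rho>)"
| LolliE: "typed \<Gamma>1 t (Lolli \<tau> \<rho>) \<Longrightarrow> typed \<Gamma>2 s \<tau> \<Longrightarrow> \<Gamma>1 \<inter> \<Gamma>2 = {}
           \<Longrightarrow> typed (\<Gamma>1 \<union> \<Gamma>2) (App t s) \<rho>"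
| WithI: "typed \<Gamma> t \<tau> \<Longrightarrow> typed \<Gamma> s \<rho> \<Longrightarrow> typed \<Gamma> (Pair t s) (With \<tau> \<rho>)"
| WithE1: "typed \<Gamma> t (With \<tau> \<rho>) \<Longrightarrow> typed \<Gamma> (App t (Const TT)) \<tau>"
| WithE0: "typed \<Gamma> t (With \<tau> \<rho>) \<Longrightarrow> typed \<Gamma> (App t (Const FF)) \<rho>"
| BoolE: "typed \<Gamma>1 t BoolT \<Longrightarrow> typed \<Gamma>2 s \<tau> \<Longrightarrow> typed \<Gamma>2 r \<tau> \<Longrightarrow> \<Gamma>1 \<inter> \<Gamma>2 = {}
           \<Longrightarrow> typed (\<Gamma>1 \<union> \<Gamma>2) (App t (Pair s r)) \<tau>"
| TensorE: "typed \<Gamma>1 t (Tensor \<tau> \<rho>) \<Longrightarrow> x \<notin> fv s \<Longrightarrow> y \<notin> fv s \<Longrightarrow> x \<noteq> y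
           \<Longrightarrow> x \<notin> \<Gamma>2 \<Longrightarrow> y \<notin> \<Gamma>2 \<Longrightarrow> snd x = \<tau> \<Longrightarrow> snd y = \<rho>
           \<Longrightarrow> typed (\<Gamma>2 \<union> {x, y}) (opn2 0 (FVar x) (FVar y) s) \<sigma> \<Longrightarrow> \<Gamma>1 \<inter> \<Gamma>2 = {}
           \<Longrightarrow> typed (\<Gamma>1 \<union> \<Gamma>2) (App t (Lam \<tau> (Lam \<rho> s))) \<sigma>"
| ListE: "typed \<Gamma> t (ListT \<tau>) \<Longrightarrow> typed {} s (Lolli Dia (Lolli \<tau> (Lolli \<rho> \<rho>)))
           \<Longrightarrow> typed \<Gamma> (App t (Brace s)) (Lolli \<rho> \<rho>)"

inductive is_list :: "ty \<Rightarrow> trm \<Rightarrow> nat \<Rightarrow> bool" where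
  "is_list \<tau> (Const (NilC \<tau>)) 0"
| "is_list \<tau> l n \<Longrightarrow> is_list \<tau> (App (App (App (Const (ConsC \<tau>)) d) a) l) (Suc n)"

inductive conv :: "trm \<Rightarrow> trm \<Rightarrow> bool" where
  beta: "conv (App (Lam \<tau> b) s) (opn 0 s b)"
| proj1: "conv (App (Pair t s) (Const TT)) t"
| proj0: "conv (App (Pair t s) (Const FF)) s"
| if1: "conv (App (Const TT) (Pair t s)) t"
| if0: "conv (App (Const FF) (Pair t s)) s"
| tens: "conv (App (App (App (Const (TensC \<tau> \<rho>)) t) s) (Lam \<tau> (Lam \<rho> r))) (opn2 0 t s r)"
| itnil: "conv (App (App (Const (NilC \<tau>)) (Brace t)) s) s"
| itcons: "is_list \<tau> l n \<Longrightarrow>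
    conv (App (App (App (App (App (Const (ConsC \<tau>)) d) a) l) (Brace t)) s)
         (App (App (App t d) a) (App (App l (Brace t)) s))"

inductive red :: "trm \<Rightarrow> trm \<Rightarrow> bool" where
  "conv t t' \<Longrightarrow> red t t'"
| "red t t' \<Longrightarrow> red (App t s) (App t' s)"
| "red s s' \<Longrightarrow> red (App t s) (App t s')"

fun len :: "trm \<Rightarrow> nat" where
  "len (FVar x) = 1"
| "len (BVar i) = 1"
| "len (Const c) = 1"
| "len (App t s) = len t + len s"
| "len (Lam \<tau> s) = len s + 1"
| "len (Pair t s) = max (len t) (len s) + 1"
| "len (Brace t) = 0"

text \<open>The weight \<open>\<pi>(t) \<in> \<nat>\<^sup>p\<^sup>o\<^sup>l\<^sup>y\<close>, as a function \<open>nat \<Rightarrow> nat\<close>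
  (\<open>X\<close> is the identity, \<open>X\<^sub>n(m) = min n m\<close>, operations pointwise).\<close>
fun pi :: "trm \<Rightarrow> nat \<Rightarrow> nat" where
  "pi (FVar x) m = 0"
| "pi (BVar i) m = 0"
| "pi (Const c) m = 0"
| "pi (App t (Brace h)) m =
     (if \<exists>\<tau> n. is_list \<tau> t n
      then pi t m + min (THE n. \<exists>\<tau>. is_list \<tau> t n) m * pi h m
                  + min (THE n. \<exists>\<tau>. is_list \<tau> t n) m * len h
      else pi t m + (m * pi h m + m * len h))"
| "pi (App t s) m = pi t m + pi s m"
| "pi (Lam \<tau> t) m = pi t m"
| "pi (Pair t s) m = max (pi t m) (pi s m)"
| "pi (Brace h) m = m * pi h m + m * len h"

end

theory Submission
  imports Defs
begin

lemma typed_finite: "typed \<Gamma> t \<tau> \<Longrightarrow> finite \<Gamma>"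
  by (induction rule: typed.induct) auto

lemma finite_fv: "finite (fv t)"
  by (induction t) auto

lemma fv_opn: "fv (opn k u b) \<subseteq> fv b \<union> fv u"
  by (induction b arbitrary: k) auto
lemma fv_opn_sup: "fv b \<subseteq> fv (opn k u b)"
  by (induction b arbitrary: k) auto
lemma fv_opn2: "fv (opn2 k u v b) \<subseteq> fv b \<union> fv u \<union> fv v"
  by (induction b arbitrary: k) auto
lemma fv_opn2_sup: "fv b \<subseteq> fv (opn2 k u v b)"
  by (induction b arbitrary: k) auto

lemma typed_fv: "typed \<Gamma> t \<tau> \<Longrightarrow> fv t \<subseteq> \<Gamma>"
proof (induction rule: typed.induct)
  case (LolliI x b \<tau> \<Gamma> \<rho>)
  then show ?case using fv_opn_sup[of b 0 "FVar x"] by auto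
next
  case (TensorE \<Gamma>1 t \<tau> \<rho> x s y \<Gamma>2 \<sigma>)
  then show ?case using fv_opn2_sup[of s 0 "FVar x" "FVar y"] by auto
qed auto

fun lcat :: "nat \<Rightarrow> trm \<Rightarrow> bool" where
  "lcat k (FVar x) = True"
| "lcat k (BVar i) = (i < k)"
| "lcat k (Const c) = True"
| "lcat k (Lam \<tau> b) = lcat (Suc k) b"
| "lcat k (Pair t s) = (lcat k t \<and> lcat k s)"
| "lcat k (App t s) = (lcat k t \<and> lcat k s)"
| "lcat k (Brace t) = lcat k t"

lemma lcat_opn: "lcat k (opn k (FVar x) b) \<Longrightarrow> lcat (Suc k) b"
  by (induction b arbitrary: k) (auto split: if_splits)
lemma lcat_opn2: "lcat k (opn2 k (FVar x) (FVar y) b) \<Longrightarrow> lcat (Suc (Suc k)) b"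
  by (induction b arbitrary: k) (auto split: if_splits)

lemma typed_lc: "typed \<Gamma> t \<tau> \<Longrightarrow> lcat 0 t"
  by (induction rule: typed.induct) (auto dest: lcat_opn lcat_opn2)

lemma opn_lc: "lcat k t \<Longrightarrow> k \<le> j \<Longrightarrow> opn j u t = t"
  by (induction t arbitrary: k j) fastforce+
lemma opn2_lc: "lcat k t \<Longrightarrow> k \<le> j \<Longrightarrow> opn2 j u v t = t"
  by (induction t arbitrary: k j) fastforce+

lemma typed_opn_id: "typed \<Gamma> t \<tau> \<Longrightarrow> opn j u t = t"
  using typed_lc opn_lc by blast
lemma typed_opn2_id: "typed \<Gamma> t \<tau> \<Longrightarrow> opn2 j u v t = t"
  using typed_lc opn2_lc by blast

lemma weaken: "typed \<Gamma> t \<tau> \<Longrightarrow> finite \<Gamma>' \<Longrightarrow> \<Gamma> \<subseteq> \<Gamma>' \<Longrightarrow> typed \<Gamma>' t \<tau>"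
proof (induction arbitrary: \<Gamma>' rule: typed.induct)
  case (Var \<Gamma> x)
  then show ?case by (auto intro: typed.Var)
next
  case (Cst \<Gamma> c)
  then show ?case by (auto intro: typed.Cst)
next
  case (LolliI x b \<tau> \<Gamma> \<rho>)
  have "typed (\<Gamma>' \<union> {x}) (opn 0 (FVar x) b) \<rho>"
    using LolliI.IH[of "\<Gamma>' \<union> {x}"] LolliI.prems by auto
  then show ?case using LolliI by (auto intro: typed.LolliI)
next
  case (LolliE \<Gamma>1 t \<tau> \<rho> \<Gamma>2 s)
  have "typed ((\<Gamma>' - \<Gamma>2) \<union> \<Gamma>2) (App t s) \<rho>"
    apply (rule typed.LolliE)
    using LolliE.IH(1)[of "\<Gamma>' - \<Gamma>2"] LolliE.prems LolliE.hyps by auto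
  moreover have "(\<Gamma>' - \<Gamma>2) \<union> \<Gamma>2 = \<Gamma>'" using LolliE by auto
  ultimately show ?case by simp
next
  case (WithI \<Gamma> t \<tau> s \<rho>)
  then show ?case by (auto intro: typed.WithI)
next
  case (WithE1 \<Gamma> t \<tau> \<rho>)
  then show ?case by (auto intro: typed.WithE1)
next
  case (WithE0 \<Gamma> t \<tau> \<rho>)
  then show ?case by (auto intro: typed.WithE0)
next
  case (BoolE \<Gamma>1 t \<Gamma>2 s \<tau> r)
  have "typed ((\<Gamma>' - \<Gamma>2) \<union> \<Gamma>2) (App t (Pair s r)) \<tau>"
    apply (rule typed.BoolE)
    using BoolE.IH(1)[of "\<Gamma>' - \<Gamma>2"] BoolE.prems BoolE.hyps by auto
  moreover have "(\<Gamma>' - \<Gamma>2) \<union> \<Gamma>2 = \<Gamma>'" using BoolE by auto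
  ultimately show ?case by simp
next
  case (TensorE \<Gamma>1 t \<tau> \<rho> x s y \<Gamma>2 \<sigma>)
  have "typed ((\<Gamma>' - \<Gamma>2) \<union> \<Gamma>2) (App t (Lam \<tau> (Lam \<rho> s))) \<sigma>"
    apply (rule typed.TensorE)
    using TensorE.IH(1)[of "\<Gamma>' - \<Gamma>2"] TensorE.prems TensorE.hyps by auto
  moreover have "(\<Gamma>' - \<Gamma>2) \<union> \<Gamma>2 = \<Gamma>'" using TensorE by auto
  ultimately show ?case by simp
next
  case (ListE \<Gamma> t \<tau> s \<rho>)
  then show ?case by (auto intro: typed.ListE)
qed


fun rename :: "(var \<Rightarrow> var) \<Rightarrow> trm \<Rightarrow> trm" where
  "rename f (FVar x) = FVar (f x)"
| "rename f (BVar i) = BVar i"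
| "rename f (Const c) = Const c"
| "rename f (Lam \<tau> b) = Lam \<tau> (rename f b)"
| "rename f (Pair t s) = Pair (rename f t) (rename f s)"
| "rename f (App t s) = App (rename f t) (rename f s)"
| "rename f (Brace t) = Brace (rename f t)"

lemma fv_rename: "fv (rename f t) = f ` fv t"
  by (induction t) auto
lemma rename_opn: "rename f (opn k u b) = opn k (rename f u) (rename f b)"
  by (induction b arbitrary: k) auto
lemma rename_opn2: "rename f (opn2 k u v b) = opn2 k (rename f u) (rename f v) (rename f b)"
  by (induction b arbitrary: k) auto
lemma rename_id: "(\<forall>z\<in>fv t. f z = z) \<Longrightarrow> rename f t = t"
  by (induction t) auto

lemma typed_rename:
  "typed \<Gamma> t \<tau> \<Longrightarrow> inj f \<Longrightarrow> (\<forall>z. snd (f z) = snd z) \<Longrightarrow> typed (f ` \<Gamma>) (rename f t) \<tau>"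
proof (induction rule: typed.induct)
  case (Var \<Gamma> x)
  have "snd (f x) = snd x" using Var.prems by blast
  then show ?case using typed.Var[of "f ` \<Gamma>" "f x"] Var.hyps by auto
next
  case (Cst \<Gamma> c)
  then show ?case by (auto intro: typed.Cst)
next
  case (LolliI x b \<tau> \<Gamma> \<rho>)
  have sx: "snd (f x) = snd x" using LolliI.prems by blast
  have "f x \<notin> fv (rename f b)" using LolliI inj_image_mem_iff[of f] by (simp add: fv_rename)
  then show ?case using LolliI sx by (auto intro!: typed.LolliI simp: rename_opn)
next
  case (LolliE \<Gamma>1 t \<tau> \<rho> \<Gamma>2 s)
  then show ?case using typed.LolliE[of "f ` \<Gamma>1" "rename f t" \<tau> \<rho> "f ` \<Gamma>2" "rename f s"]
    by (simp add: image_Un image_Int[OF LolliE.prems(1), symmetric])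
next
  case (WithI \<Gamma> t \<tau> s \<rho>)
  then show ?case by (auto intro: typed.WithI)
next
  case (WithE1 \<Gamma> t \<tau> \<rho>)
  then show ?case using typed.WithE1[of "f ` \<Gamma>" "rename f t" \<tau> \<rho>] by simp
next
  case (WithE0 \<Gamma> t \<tau> \<rho>)
  then show ?case using typed.WithE0[of "f ` \<Gamma>" "rename f t" \<tau> \<rho>] by simp
next
  case (BoolE \<Gamma>1 t \<Gamma>2 s \<tau> r)
  then show ?case using typed.BoolE[of "f ` \<Gamma>1" "rename f t" "f ` \<Gamma>2"]
    by (simp add: image_Un image_Int[OF BoolE.prems(1), symmetric])
next
  case (TensorE \<Gamma>1 t \<tau> \<rho> x s y \<Gamma>2 \<sigma>)
  have "typed (f ` \<Gamma>1 \<union> f ` \<Gamma>2) (App (rename f t) (Lam \<tau> (Lam \<rho> (rename f s)))) \<sigma>"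
    apply (rule typed.TensorE[where x="f x" and y="f y"])
    using TensorE inj_image_mem_iff[of f] inj_eq[of f] spec[OF TensorE.prems(2), of x] spec[OF TensorE.prems(2), of y]
    by (simp_all add: fv_rename image_Un image_Int[OF TensorE.prems(1), symmetric] rename_opn2)
  then show ?case by (simp add: image_Un)
next
  case (ListE \<Gamma> t \<tau> s \<rho>)
  then show ?case using typed.ListE[of "f ` \<Gamma>" "rename f t" \<tau> "rename f s" \<rho>] by simp
qed

definition sw :: "var \<Rightarrow> var \<Rightarrow> var \<Rightarrow> var" where
  "sw a b z = (if z = a then b else if z = b then a else z)"

lemma inj_sw: "inj (sw a b)"
proof (rule injI)
  fix x y assume "sw a b x = sw a b y"
  then show "x = y" unfolding sw_def
    by (cases "x = a"; cases "x = b"; cases "y = a"; cases "y = b") simp_all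
qed
lemma snd_sw: "snd a = snd b \<Longrightarrow> snd (sw a b z) = snd z"
  unfolding sw_def by auto

lemma typed_sw: "typed \<Gamma> t \<tau> \<Longrightarrow> snd a = snd b \<Longrightarrow> typed (sw a b ` \<Gamma>) (rename (sw a b) t) \<tau>"
  using typed_rename inj_sw snd_sw by blast

lemma fresh:
  fixes A :: "var set"
  assumes "finite A" shows "\<exists>z. z \<notin> A \<and> snd z = T"
proof -
  have fin: "finite (fst ` A)" using assms by simp
  have "Suc (Max (fst ` A)) \<notin> fst ` A"
  proof
    assume "Suc (Max (fst ` A)) \<in> fst ` A"
    from Max_ge[OF fin this] show False by simp
  qed
  then have "\<exists>n. n \<notin> fst ` A" ..
  then obtain n where n: "n \<notin> fst ` A" ..
  have "(n, T) \<notin> A"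
  proof
    assume "(n, T) \<in> A"
    then have "fst (n, T) \<in> fst ` A" by (rule imageI)
    with n show False by simp
  qed
  then show ?thesis by (intro exI[where x="(n, T)"]) simp
qed

lemma rename1:
  assumes "typed (\<Gamma> \<union> {x}) (opn 0 (FVar x) b) \<rho>" "x \<notin> fv b" "x' \<notin> fv b" "x' \<notin> \<Gamma>" "snd x' = snd x"
    "x' \<noteq> x"
  shows "typed (\<Gamma> \<union> {x'}) (opn 0 (FVar x') b) \<rho>"
proof -
  have "snd x = snd x'" using assms by simp
  from typed_sw[OF assms(1) this]
  have "typed (sw x x' ` (\<Gamma> \<union> {x})) (rename (sw x x') (opn 0 (FVar x) b)) \<rho>" .
  moreover have "rename (sw x x') b = b"
    by (rule rename_id) (use assms in \<open>auto simp: sw_def\<close>)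
  moreover have "rename (sw x x') (opn 0 (FVar x) b) = opn 0 (FVar x') b"
    using calculation(2) by (simp add: rename_opn sw_def)
  moreover have "sw x x' ` (\<Gamma> \<union> {x}) \<subseteq> \<Gamma> \<union> {x'}"
    using assms by (auto simp: sw_def)
  moreover have "finite (\<Gamma> \<union> {x'})" using typed_finite[OF assms(1)] by auto
  ultimately show ?thesis using weaken by simp
qed

lemma rename2:
  assumes "typed (\<Gamma> \<union> {x, y}) (opn2 0 (FVar x) (FVar y) b) \<rho>" "x \<notin> fv b" "y \<notin> fv b"
    "x' \<notin> fv b" "y' \<notin> fv b" "x' \<notin> \<Gamma>" "y' \<notin> \<Gamma>" "x \<notin> \<Gamma>" "y \<notin> \<Gamma>"
    "snd x' = snd x" "snd y' = snd y"
    "x \<noteq> y" "x' \<noteq> y'" "x' \<noteq> x" "x' \<noteq> y" "y' \<noteq> x" "y' \<noteq> y"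
  shows "typed (\<Gamma> \<union> {x', y'}) (opn2 0 (FVar x') (FVar y') b) \<rho>"
proof -
  have "snd x = snd x'" using assms by simp
  from typed_sw[OF assms(1) this]
  have "typed (sw x x' ` (\<Gamma> \<union> {x, y})) (rename (sw x x') (opn2 0 (FVar x) (FVar y) b)) \<rho>" .
  moreover have "rename (sw x x') b = b"
    by (rule rename_id) (use assms in \<open>auto simp: sw_def\<close>)
  moreover have "rename (sw x x') (opn2 0 (FVar x) (FVar y) b) = opn2 0 (FVar x') (FVar y) b"
    using calculation(2) assms by (simp add: rename_opn2 sw_def)
  moreover have "sw x x' ` (\<Gamma> \<union> {x, y}) = \<Gamma> \<union> {x', y}"
    using assms by (auto simp: sw_def image_def)
  ultimately have 1: "typed (\<Gamma> \<union> {x', y}) (opn2 0 (FVar x') (FVar y) b) \<rho>" by simp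
  have "snd y = snd y'" using assms by simp
  from typed_sw[OF 1 this]
  have "typed (sw y y' ` (\<Gamma> \<union> {x', y})) (rename (sw y y') (opn2 0 (FVar x') (FVar y) b)) \<rho>" .
  moreover have "rename (sw y y') b = b"
    by (rule rename_id) (use assms in \<open>auto simp: sw_def\<close>)
  moreover have "rename (sw y y') (opn2 0 (FVar x') (FVar y) b) = opn2 0 (FVar x') (FVar y') b"
    using calculation(2) assms by (simp add: rename_opn2 sw_def)
  moreover have "sw y y' ` (\<Gamma> \<union> {x', y}) = \<Gamma> \<union> {x', y'}"
    using assms by (auto simp: sw_def image_def)
  ultimately show ?thesis by simp
qed


fun subst :: "var \<Rightarrow> trm \<Rightarrow> trm \<Rightarrow> trm" where
  "subst x s (FVar z) = (if z = x then s else FVar z)"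
| "subst x s (BVar i) = BVar i"
| "subst x s (Const c) = Const c"
| "subst x s (Lam \<tau> b) = Lam \<tau> (subst x s b)"
| "subst x s (Pair t r) = Pair (subst x s t) (subst x s r)"
| "subst x s (App t r) = App (subst x s t) (subst x s r)"
| "subst x s (Brace t) = Brace (subst x s t)"

fun tsz :: "trm \<Rightarrow> nat" where
  "tsz (FVar z) = 1"
| "tsz (BVar i) = 1"
| "tsz (Const c) = 1"
| "tsz (Lam \<tau> b) = Suc (tsz b)"
| "tsz (Pair t r) = Suc (tsz t + tsz r)"
| "tsz (App t r) = Suc (tsz t + tsz r)"
| "tsz (Brace t) = Suc (tsz t)"

lemma subst_id: "x \<notin> fv t \<Longrightarrow> subst x s t = t"
  by (induction t) auto
lemma fv_subst: "fv (subst x s t) \<subseteq> (fv t - {x}) \<union> fv s"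
  by (induction t) auto
lemma subst_opn: "lcat 0 s \<Longrightarrow> subst x s (opn k u b) = opn k (subst x s u) (subst x s b)"
  by (induction b arbitrary: k) (auto simp: opn_lc)
lemma subst_opn2: "lcat 0 s \<Longrightarrow> subst x s (opn2 k u v b) = opn2 k (subst x s u) (subst x s v) (subst x s b)"
  by (induction b arbitrary: k) (auto simp: opn2_lc)
lemma tsz_opn: "tsz (opn k (FVar x) b) = tsz b"
  by (induction b arbitrary: k) auto
lemma tsz_opn2: "tsz (opn2 k (FVar x) (FVar y) b) = tsz b"
  by (induction b arbitrary: k) auto

lemma subst_typed:
  assumes "typed \<Delta> u \<rho>" "typed \<Gamma>2 s (snd x)" "(\<Delta> - {x}) \<inter> \<Gamma>2 = {}"
  shows "typed ((\<Delta> - {x}) \<union> \<Gamma>2) (subst x s u) \<rho>"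
  using assms
proof (induction "tsz u" arbitrary: u \<Delta> \<rho> rule: less_induct)
  case less
  have fin2: "finite \<Gamma>2" using less.prems(2) typed_finite by blast
  have finD: "finite \<Delta>" using less.prems(1) typed_finite by blast
  have lcs: "lcat 0 s" using less.prems(2) typed_lc by blast
  have fvs: "fv s \<subseteq> \<Gamma>2" using typed_fv less.prems(2) by blast
  have disj: "(\<Delta> - {x}) \<inter> \<Gamma>2 = {}" by (rule less.prems(3))
  from less.prems(1) show ?case
  proof cases
    case (Var z)
    show ?thesis
    proof (cases "z = x")
      case True
      then show ?thesis using Var weaken[OF less.prems(2)] fin2 finD by auto
    next
      case False
      then show ?thesis using Var fin2 finD by (auto intro: typed.Var)
    qed
  next
    case (Cst c)
    then show ?thesis using fin2 finD by (auto intro: typed.Cst)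
  next
    case (LolliI z b \<sigma> \<rho>')
    have finA: "finite (\<Delta> \<union> \<Gamma>2 \<union> fv b \<union> {x, z})" using fin2 finD finite_fv by auto
    obtain z' where z': "z' \<notin> \<Delta> \<union> \<Gamma>2 \<union> fv b \<union> {x, z}" "snd z' = \<sigma>"
      using fresh[OF finA] by blast
    have t1: "typed (\<Delta> \<union> {z'}) (opn 0 (FVar z') b) \<rho>'"
      using rename1[of \<Delta> z b \<rho>' z'] LolliI z' by auto
    have "tsz (opn 0 (FVar z') b) < tsz u" using LolliI by (simp add: tsz_opn)
    moreover have "((\<Delta> \<union> {z'}) - {x}) \<inter> \<Gamma>2 = {}" using disj z' by auto
    ultimately have "typed (((\<Delta> \<union> {z'}) - {x}) \<union> \<Gamma>2) (subst x s (opn 0 (FVar z') b)) \<rho>'"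
      using less.hyps t1 less.prems(2) by blast
    moreover have "subst x s (opn 0 (FVar z') b) = opn 0 (FVar z') (subst x s b)"
      using z' by (simp add: subst_opn[OF lcs])
    moreover have "((\<Delta> \<union> {z'}) - {x}) \<union> \<Gamma>2 = ((\<Delta> - {x}) \<union> \<Gamma>2) \<union> {z'}" using z' by auto
    ultimately have t2: "typed (((\<Delta> - {x}) \<union> \<Gamma>2) \<union> {z'}) (opn 0 (FVar z') (subst x s b)) \<rho>'" by simp
    have "z' \<notin> fv (subst x s b)" using fv_subst[of x s b] fvs z' by auto
    from typed.LolliI[OF this _ t2] z' LolliI show ?thesis by simp
  next
    case (LolliE \<Gamma>a t \<tau>' \<Gamma>b s')
    have fa: "fv t \<subseteq> \<Gamma>a" "fv s' \<subseteq> \<Gamma>b" using LolliE typed_fv by blast+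
    show ?thesis
    proof (cases "x \<in> \<Gamma>b")
      case True
      have "tsz s' < tsz u" using LolliE by simp
      moreover have "(\<Gamma>b - {x}) \<inter> \<Gamma>2 = {}" using disj LolliE by auto
      ultimately have h: "typed ((\<Gamma>b - {x}) \<union> \<Gamma>2) (subst x s s') \<tau>'"
        using less.hyps LolliE less.prems(2) by blast
      have "subst x s t = t" using fa True LolliE by (auto intro: subst_id)
      moreover have "typed (\<Gamma>a \<union> ((\<Gamma>b - {x}) \<union> \<Gamma>2)) (App t (subst x s s')) \<rho>"
        apply (rule typed.LolliE[OF _ h]) using LolliE disj True by auto
      moreover have "\<Gamma>a \<union> ((\<Gamma>b - {x}) \<union> \<Gamma>2) = (\<Delta> - {x}) \<union> \<Gamma>2" using LolliE True by auto
      ultimately show ?thesis using LolliE by simp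
    next
      case False
      have "tsz t < tsz u" using LolliE by simp
      moreover have "(\<Gamma>a - {x}) \<inter> \<Gamma>2 = {}" using disj LolliE by auto
      ultimately have h: "typed ((\<Gamma>a - {x}) \<union> \<Gamma>2) (subst x s t) (Lolli \<tau>' \<rho>)"
        using less.hyps LolliE less.prems(2) by blast
      have "subst x s s' = s'" using fa False LolliE by (auto intro: subst_id)
      moreover have "typed (((\<Gamma>a - {x}) \<union> \<Gamma>2) \<union> \<Gamma>b) (App (subst x s t) s') \<rho>"
        apply (rule typed.LolliE[OF h]) using LolliE disj False by auto
      moreover have "((\<Gamma>a - {x}) \<union> \<Gamma>2) \<union> \<Gamma>b = (\<Delta> - {x}) \<union> \<Gamma>2" using LolliE False by auto
      ultimately show ?thesis using LolliE by simp
    qed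
  next
    case (WithI t \<tau>' s' \<rho>')
    have "typed ((\<Delta> - {x}) \<union> \<Gamma>2) (subst x s t) \<tau>'"
      using less.hyps[of t] WithI less.prems(2) disj by simp
    moreover have "typed ((\<Delta> - {x}) \<union> \<Gamma>2) (subst x s s') \<rho>'"
      using less.hyps[of s'] WithI less.prems(2) disj by simp
    ultimately show ?thesis using WithI by (simp add: typed.WithI)
  next
    case (WithE1 t \<rho>')
    have "typed ((\<Delta> - {x}) \<union> \<Gamma>2) (subst x s t) (With \<rho> \<rho>')"
      using less.hyps[of t] WithE1 less.prems(2) disj by simp
    then show ?thesis using WithE1 by (simp add: typed.WithE1)
  next
    case (WithE0 t \<tau>')
    have "typed ((\<Delta> - {x}) \<union> \<Gamma>2) (subst x s t) (With \<tau>' \<rho>)"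
      using less.hyps[of t] WithE0 less.prems(2) disj by simp
    then show ?thesis using WithE0 by (simp add: typed.WithE0)
  next
    case (BoolE \<Gamma>a t \<Gamma>b s1 r)
    have fa: "fv t \<subseteq> \<Gamma>a" "fv s1 \<subseteq> \<Gamma>b" "fv r \<subseteq> \<Gamma>b" using BoolE typed_fv by blast+
    show ?thesis
    proof (cases "x \<in> \<Gamma>b")
      case True
      have d: "(\<Gamma>b - {x}) \<inter> \<Gamma>2 = {}" using disj BoolE by auto
      have h1: "typed ((\<Gamma>b - {x}) \<union> \<Gamma>2) (subst x s s1) \<rho>"
        using less.hyps[of s1] BoolE less.prems(2) d by simp
      have h2: "typed ((\<Gamma>b - {x}) \<union> \<Gamma>2) (subst x s r) \<rho>"
        using less.hyps[of r] BoolE less.prems(2) d by simp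
      have "subst x s t = t" using fa True BoolE by (auto intro: subst_id)
      moreover have "typed (\<Gamma>a \<union> ((\<Gamma>b - {x}) \<union> \<Gamma>2)) (App t (Pair (subst x s s1) (subst x s r))) \<rho>"
        apply (rule typed.BoolE[OF _ h1 h2]) using BoolE disj True by auto
      moreover have "\<Gamma>a \<union> ((\<Gamma>b - {x}) \<union> \<Gamma>2) = (\<Delta> - {x}) \<union> \<Gamma>2" using BoolE True by auto
      ultimately show ?thesis using BoolE by simp
    next
      case False
      have "tsz t < tsz u" using BoolE by simp
      moreover have "(\<Gamma>a - {x}) \<inter> \<Gamma>2 = {}" using disj BoolE by auto
      ultimately have h: "typed ((\<Gamma>a - {x}) \<union> \<Gamma>2) (subst x s t) BoolT"
        using less.hyps BoolE less.prems(2) by blast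
      have "subst x s s1 = s1" "subst x s r = r" using fa False BoolE by (auto intro: subst_id)
      moreover have "typed (((\<Gamma>a - {x}) \<union> \<Gamma>2) \<union> \<Gamma>b) (App (subst x s t) (Pair s1 r)) \<rho>"
        apply (rule typed.BoolE[OF h]) using BoolE disj False by auto
      moreover have "((\<Gamma>a - {x}) \<union> \<Gamma>2) \<union> \<Gamma>b = (\<Delta> - {x}) \<union> \<Gamma>2" using BoolE False by auto
      ultimately show ?thesis using BoolE by simp
    qed
  next
    case (TensorE \<Gamma>a t \<tau>' \<rho>' x0 r y0 \<Gamma>b)
    have fa: "fv t \<subseteq> \<Gamma>a" using TensorE typed_fv by blast
    have fr: "fv r \<subseteq> \<Gamma>b"
      using TensorE typed_fv[of "\<Gamma>b \<union> {x0, y0}"] fv_opn2_sup[of r 0 "FVar x0" "FVar y0"] by blast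
    show ?thesis
    proof (cases "x \<in> \<Gamma>b")
      case True
      have finA: "finite (\<Delta> \<union> \<Gamma>2 \<union> fv r \<union> {x, x0, y0})" using fin2 finD finite_fv by auto
      obtain x' where x': "x' \<notin> \<Delta> \<union> \<Gamma>2 \<union> fv r \<union> {x, x0, y0}" "snd x' = \<tau>'"
        using fresh[OF finA] by blast
      have finB: "finite (\<Delta> \<union> \<Gamma>2 \<union> fv r \<union> {x, x0, y0, x'})" using fin2 finD finite_fv by auto
      obtain y' where y': "y' \<notin> \<Delta> \<union> \<Gamma>2 \<union> fv r \<union> {x, x0, y0, x'}" "snd y' = \<rho>'"
        using fresh[OF finB] by blast
      have t1: "typed (\<Gamma>b \<union> {x', y'}) (opn2 0 (FVar x') (FVar y') r) \<rho>"
        apply (rule rename2[of \<Gamma>b x0 y0 r \<rho> x' y'])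
        using TensorE x' y' by auto
      have "tsz (opn2 0 (FVar x') (FVar y') r) < tsz u" using TensorE by (simp add: tsz_opn2)
      moreover have "((\<Gamma>b \<union> {x', y'}) - {x}) \<inter> \<Gamma>2 = {}" using disj x' y' TensorE by auto
      ultimately have "typed (((\<Gamma>b \<union> {x', y'}) - {x}) \<union> \<Gamma>2) (subst x s (opn2 0 (FVar x') (FVar y') r)) \<rho>"
        using less.hyps t1 less.prems(2) by blast
      moreover have "subst x s (opn2 0 (FVar x') (FVar y') r) = opn2 0 (FVar x') (FVar y') (subst x s r)"
        using x' y' by (simp add: subst_opn2[OF lcs])
      moreover have "((\<Gamma>b \<union> {x', y'}) - {x}) \<union> \<Gamma>2 = ((\<Gamma>b - {x}) \<union> \<Gamma>2) \<union> {x', y'}" using x' y' by auto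
      ultimately have t2: "typed (((\<Gamma>b - {x}) \<union> \<Gamma>2) \<union> {x', y'}) (opn2 0 (FVar x') (FVar y') (subst x s r)) \<rho>"
        by simp
      have nx: "x' \<notin> fv (subst x s r)" "y' \<notin> fv (subst x s r)"
        using fv_subst[of x s r] fvs x' y' by auto
      have "subst x s t = t" using fa True TensorE by (auto intro: subst_id)
      moreover have "typed (\<Gamma>a \<union> ((\<Gamma>b - {x}) \<union> \<Gamma>2)) (App t (Lam \<tau>' (Lam \<rho>' (subst x s r)))) \<rho>"
        apply (rule typed.TensorE[OF _ nx _ _ _ _ _ t2])
        using TensorE disj True x' y' by auto
      moreover have "\<Gamma>a \<union> ((\<Gamma>b - {x}) \<union> \<Gamma>2) = (\<Delta> - {x}) \<union> \<Gamma>2" using TensorE True by auto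
      ultimately show ?thesis using TensorE by simp
    next
      case False
      have "tsz t < tsz u" using TensorE by simp
      moreover have "(\<Gamma>a - {x}) \<inter> \<Gamma>2 = {}" using disj TensorE by auto
      ultimately have h: "typed ((\<Gamma>a - {x}) \<union> \<Gamma>2) (subst x s t) (Tensor \<tau>' \<rho>')"
        using less.hyps TensorE less.prems(2) by blast
      have "subst x s r = r" using fr False by (auto intro: subst_id)
      moreover have "typed (((\<Gamma>a - {x}) \<union> \<Gamma>2) \<union> \<Gamma>b) (App (subst x s t) (Lam \<tau>' (Lam \<rho>' r))) \<rho>"
        apply (rule typed.TensorE[OF h])
        using TensorE disj False by auto
      moreover have "((\<Gamma>a - {x}) \<union> \<Gamma>2) \<union> \<Gamma>b = (\<Delta> - {x}) \<union> \<Gamma>2" using TensorE False by auto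
      ultimately show ?thesis using TensorE by simp
    qed
  next
    case (ListE t \<tau>' h \<rho>')
    have "typed ((\<Delta> - {x}) \<union> \<Gamma>2) (subst x s t) (ListT \<tau>')"
      using less.hyps[of t] ListE less.prems(2) disj by simp
    moreover have "subst x s h = h" using typed_fv[OF ListE(4)] by (auto intro: subst_id)
    ultimately show ?thesis using ListE by (simp add: typed.ListE)
  qed
qed


inductive_cases AppE: "typed \<Gamma> (App t s) \<rho>"
inductive_cases ConstE: "typed \<Gamma> (Const c) \<tau>"
inductive_cases LamE: "typed \<Gamma> (Lam \<sigma> b) \<tau>"
inductive_cases PairE: "typed \<Gamma> (Pair a b) \<tau>"
inductive_cases BraceE: "typed \<Gamma> (Brace h) \<tau>"
inductive_cases FVarE: "typed \<Gamma> (FVar x) \<tau>"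
inductive_cases BVarE: "typed \<Gamma> (BVar i) \<tau>"

lemma const_ty: "typed \<Gamma> (Const c) \<tau> \<Longrightarrow> \<tau> = ctype c"
  by (erule ConstE) simp
lemma no_brace: "\<not> typed \<Gamma> (Brace h) \<tau>"
  by (auto elim: BraceE)
lemma lam_ty: "typed \<Gamma> (Lam \<sigma> b) \<tau> \<Longrightarrow> \<exists>\<rho>. \<tau> = Lolli \<sigma> \<rho>"
  by (erule LamE) simp
lemma pair_ty: "typed \<Gamma> (Pair a b) \<tau> \<Longrightarrow> \<exists>\<tau>1 \<tau>2. \<tau> = With \<tau>1 \<tau>2 \<and> typed \<Gamma> a \<tau>1 \<and> typed \<Gamma> b \<tau>2"
  by (erule PairE) simp

lemma app_fun: "typed \<Gamma> (App t s) \<rho> \<Longrightarrow> \<exists>\<Gamma>' \<sigma>. \<Gamma>' \<subseteq> \<Gamma> \<and> typed \<Gamma>' t \<sigma>"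
  by (erule AppE) blast+

lemma app_arg_app: "typed \<Gamma> (App t (App a b)) \<rho> \<Longrightarrow>
   \<exists>\<Gamma>1 \<Gamma>2 \<sigma>. \<Gamma> = \<Gamma>1 \<union> \<Gamma>2 \<and> \<Gamma>1 \<inter> \<Gamma>2 = {} \<and> typed \<Gamma>1 t (Lolli \<sigma> \<rho>) \<and> typed \<Gamma>2 (App a b) \<sigma>"
  by (erule AppE) blast+

lemma app_const:
  assumes "typed \<Gamma> (App (Const c) s) X" and ct: "ctype c = Lolli A B"
  shows "X = B \<and> (\<exists>\<Gamma>1 \<Gamma>2. \<Gamma> = \<Gamma>1 \<union> \<Gamma>2 \<and> \<Gamma>1 \<inter> \<Gamma>2 = {} \<and> finite \<Gamma>1 \<and> typed \<Gamma>2 s A)"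
  using assms(1)
  apply (rule AppE)
  subgoal for \<Gamma>1 \<tau> \<Gamma>2
  proof -
    assume h: "\<Gamma> = \<Gamma>1 \<union> \<Gamma>2" "typed \<Gamma>1 (Const c) (Lolli \<tau> X)" "typed \<Gamma>2 s \<tau>" "\<Gamma>1 \<inter> \<Gamma>2 = {}"
    from const_ty[OF h(2)] ct have "\<tau> = A" "X = B" by simp_all
    then show ?thesis using h typed_finite[OF h(2)] by blast
  qed
  by (auto dest!: const_ty simp: ct)

lemma app_const_ty: "typed \<Gamma> (App (Const c) s) X \<Longrightarrow> ctype c = Lolli A B \<Longrightarrow> X = B"
  using app_const by blast

lemma app2:
  assumes "typed \<Gamma> (App (App (Const c) a) b) X" and ct: "ctype c = Lolli A1 (Lolli A2 R)"
  shows "X = R \<and> (\<exists>\<Gamma>1 \<Gamma>2 \<Gamma>3. \<Gamma> = \<Gamma>1 \<union> \<Gamma>2 \<union> \<Gamma>3 \<and> \<Gamma>1 \<inter> \<Gamma>2 = {} \<and> (\<Gamma>1 \<union> \<Gamma>2) \<inter> \<Gamma>3 = {}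
      \<and> finite \<Gamma>1 \<and> typed \<Gamma>2 a A1 \<and> typed \<Gamma>3 b A2)"
  using assms(1)
  apply (rule AppE)
  subgoal for \<Gamma>1 \<tau> \<Gamma>2
    using app_const[of \<Gamma>1 c a "Lolli \<tau> X" A1 "Lolli A2 R"] ct by blast
  by (auto dest!: app_const_ty[OF _ ct])

lemma cons_inv:
  assumes "typed \<Gamma> (App (App (App (Const (ConsC \<tau>)) d) a) l) X"
  shows "X = ListT \<tau> \<and> (\<exists>\<Gamma>1 \<Gamma>2 \<Gamma>3 \<Gamma>4. \<Gamma> = \<Gamma>1 \<union> \<Gamma>2 \<union> \<Gamma>3 \<union> \<Gamma>4 \<and> \<Gamma>1 \<inter> \<Gamma>2 = {} \<and> (\<Gamma>1 \<union> \<Gamma>2) \<inter> \<Gamma>3 = {}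
      \<and> (\<Gamma>1 \<union> \<Gamma>2 \<union> \<Gamma>3) \<inter> \<Gamma>4 = {}
      \<and> finite \<Gamma>1 \<and> typed \<Gamma>2 d Dia \<and> typed \<Gamma>3 a \<tau> \<and> typed \<Gamma>4 l (ListT \<tau>))"
proof -
  have c: "ctype (ConsC \<tau>) = Lolli Dia (Lolli \<tau> (Lolli (ListT \<tau>) (ListT \<tau>)))" by simp
  have ty: "typed G (App (App (Const (ConsC \<tau>)) d) a) Y \<Longrightarrow> Y = Lolli (ListT \<tau>) (ListT \<tau>)" for G Y
    using app2[OF _ c] by blast
  show ?thesis
    using assms
    apply (rule AppE)
    subgoal for \<Gamma>1 \<sigma> \<Gamma>2
      using app2[OF _ c, of \<Gamma>1 d a "Lolli \<sigma> X"] by blast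
    by (auto dest!: ty)
qed

lemma tens_inv: "typed \<Gamma> (App (App (Const (TensC \<tau> \<rho>)) t) s) X \<Longrightarrow>
   X = Tensor \<tau> \<rho> \<and> (\<exists>\<Gamma>1 \<Gamma>2 \<Gamma>3. \<Gamma> = \<Gamma>1 \<union> \<Gamma>2 \<union> \<Gamma>3 \<and> \<Gamma>1 \<inter> \<Gamma>2 = {} \<and> (\<Gamma>1 \<union> \<Gamma>2) \<inter> \<Gamma>3 = {}
      \<and> finite \<Gamma>1 \<and> typed \<Gamma>2 t \<tau> \<and> typed \<Gamma>3 s \<rho>)"
  using app2[of \<Gamma> "TensC \<tau> \<rho>" t s X \<tau> \<rho> "Tensor \<tau> \<rho>"] by simp

lemma brace_inv: "typed \<Gamma> (App t (Brace h)) X \<Longrightarrow>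
   \<exists>\<tau> \<rho>. X = Lolli \<rho> \<rho> \<and> typed \<Gamma> t (ListT \<tau>) \<and> typed {} h (Lolli Dia (Lolli \<tau> (Lolli \<rho> \<rho>)))"
  by (erule AppE) (auto simp: no_brace)


lemma beta_inv:
  assumes "typed \<Gamma> (App (Lam \<sigma> b) s) \<tau>"
  shows "\<exists>\<Gamma>1 \<Gamma>2 z. \<Gamma> = \<Gamma>1 \<union> \<Gamma>2 \<and> \<Gamma>1 \<inter> \<Gamma>2 = {} \<and> typed \<Gamma>2 s \<sigma> \<and> z \<notin> fv b \<and> snd z = \<sigma>
      \<and> typed (\<Gamma>1 \<union> {z}) (opn 0 (FVar z) b) \<tau>"
  using assms
  apply (rule AppE)
  subgoal for \<Gamma>1 \<sigma>' \<Gamma>2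
  proof -
    assume h: "\<Gamma> = \<Gamma>1 \<union> \<Gamma>2" "typed \<Gamma>1 (Lam \<sigma> b) (Lolli \<sigma>' \<tau>)" "typed \<Gamma>2 s \<sigma>'"
      "\<Gamma>1 \<inter> \<Gamma>2 = {}"
    from h(2) obtain z where z: "z \<notin> fv b" "snd z = \<sigma>" "\<sigma>' = \<sigma>"
      "typed (\<Gamma>1 \<union> {z}) (opn 0 (FVar z) b) \<tau>"
      by (rule LamE) auto
    show ?thesis
      apply (rule exI[of _ \<Gamma>1], rule exI[of _ \<Gamma>2], rule exI[of _ z])
      using h z by simp
  qed
  by (auto dest!: lam_ty)

lemma tens_inv2:
  assumes "typed \<Gamma> (App (App (App (Const (TensC \<tau> \<rho>)) t) s) (Lam \<tau>' (Lam \<rho>' r))) \<sigma>"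
  shows "\<exists>\<Gamma>A \<Gamma>B x y. \<Gamma> = \<Gamma>A \<union> \<Gamma>B \<and> \<Gamma>A \<inter> \<Gamma>B = {}
     \<and> typed \<Gamma>A (App (App (Const (TensC \<tau> \<rho>)) t) s) (Tensor \<tau> \<rho>)
     \<and> x \<notin> fv r \<and> y \<notin> fv r \<and> x \<noteq> y \<and> x \<notin> \<Gamma>B \<and> y \<notin> \<Gamma>B \<and> snd x = \<tau> \<and> snd y = \<rho>
     \<and> typed (\<Gamma>B \<union> {x, y}) (opn2 0 (FVar x) (FVar y) r) \<sigma>"
  using assms
  apply (rule AppE)
  subgoal for \<Gamma>1 \<sigma>' \<Gamma>2 using tens_inv[of \<Gamma>1 \<tau> \<rho> t s "Lolli \<sigma>' \<sigma>"] by simp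
  apply simp
  apply simp
  apply simp
  subgoal for \<Gamma>1 x s' y \<Gamma>2
  proof -
    assume h: "\<Gamma> = \<Gamma>1 \<union> \<Gamma>2" "Lam \<tau>' (Lam \<rho>' r) = Lam (snd x) (Lam (snd y) s')"
      "typed \<Gamma>1 (App (App (Const (TensC \<tau> \<rho>)) t) s) (Tensor (snd x) (snd y))"
      "x \<notin> fv s'" "y \<notin> fv s'" "x \<noteq> y" "x \<notin> \<Gamma>2" "y \<notin> \<Gamma>2"
      "typed (insert x (insert y \<Gamma>2)) (opn2 0 (FVar x) (FVar y) s') \<sigma>" "\<Gamma>1 \<inter> \<Gamma>2 = {}"
    from tens_inv[OF h(3)] have e: "snd x = \<tau>" "snd y = \<rho>" by simp_all
    show ?thesis
      apply (rule exI[of _ \<Gamma>1], rule exI[of _ \<Gamma>2], rule exI[of _ x], rule exI[of _ y])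
      using h e by simp
  qed
  by simp

lemma itcons_inv:
  assumes "typed \<Gamma> (App (App (App (App (App (Const (ConsC \<tau>)) d) a) l) (Brace h)) s) \<sigma>"
  shows "\<exists>\<Gamma>A \<Gamma>B. \<Gamma> = \<Gamma>A \<union> \<Gamma>B \<and> \<Gamma>A \<inter> \<Gamma>B = {} \<and> typed \<Gamma>B s \<sigma>
     \<and> typed \<Gamma>A (App (App (App (Const (ConsC \<tau>)) d) a) l) (ListT \<tau>)
     \<and> typed {} h (Lolli Dia (Lolli \<tau> (Lolli \<sigma> \<sigma>)))"
  using assms
  apply (rule AppE)
  subgoal for \<Gamma>1 \<sigma>' \<Gamma>2
    apply (drule brace_inv)
    apply clarify
    subgoal for \<tau>1 using cons_inv[of \<Gamma>1 \<tau> d a l "ListT \<tau>1"] by auto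
    done
  by (auto dest!: brace_inv)

lemma itnil_inv:
  assumes "typed \<Gamma> (App (App (Const (NilC \<tau>)) (Brace h)) s) \<sigma>"
  shows "\<exists>\<Gamma>A \<Gamma>B. \<Gamma> = \<Gamma>A \<union> \<Gamma>B \<and> \<Gamma>A \<inter> \<Gamma>B = {} \<and> typed \<Gamma>B s \<sigma>"
  using assms
  apply (rule AppE)
  subgoal for \<Gamma>1 \<sigma>' \<Gamma>2 by (drule brace_inv) blast
  by (auto dest!: brace_inv)

lemma beta_typed:
  assumes "typed \<Gamma> (App (Lam \<tau> b) s) \<sigma>"
  shows "typed \<Gamma> (opn 0 s b) \<sigma>"
proof -
  from beta_inv[OF assms] obtain \<Gamma>1 \<Gamma>2 z where h: "\<Gamma> = \<Gamma>1 \<union> \<Gamma>2" "\<Gamma>1 \<inter> \<Gamma>2 = {}" "typed \<Gamma>2 s \<tau>" "z \<notin> fv b"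
    "snd z = \<tau>" "typed (\<Gamma>1 \<union> {z}) (opn 0 (FVar z) b) \<sigma>"
    by blast
  have d: "((\<Gamma>1 \<union> {z}) - {z}) \<inter> \<Gamma>2 = {}" using h by auto
  have ts: "typed \<Gamma>2 s (snd z)" using h by simp
  have t: "typed (((\<Gamma>1 \<union> {z}) - {z}) \<union> \<Gamma>2) (subst z s (opn 0 (FVar z) b)) \<sigma>"
    by (rule subst_typed[OF h(6) ts d])
  have e: "subst z s (opn 0 (FVar z) b) = opn 0 s b"
    using h typed_lc[OF h(3)] by (simp add: subst_opn subst_id)
  have fin: "finite \<Gamma>" using typed_finite[OF assms] .
  have sub: "((\<Gamma>1 \<union> {z}) - {z}) \<union> \<Gamma>2 \<subseteq> \<Gamma>" using h by auto
  show ?thesis using weaken[OF t fin sub] e by simp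
qed

lemma tens_typed:
  assumes "typed \<Gamma> (App (App (App (Const (TensC \<tau> \<rho>)) t) s) (Lam \<tau> (Lam \<rho> r))) \<sigma>"
  shows "typed \<Gamma> (opn2 0 t s r) \<sigma>"
proof -
  from assms obtain \<Gamma>A \<Gamma>B x y where h: "\<Gamma> = \<Gamma>A \<union> \<Gamma>B" "\<Gamma>A \<inter> \<Gamma>B = {}"
     "typed \<Gamma>A (App (App (Const (TensC \<tau> \<rho>)) t) s) (Tensor \<tau> \<rho>)"
     "x \<notin> fv r" "y \<notin> fv r" "x \<noteq> y" "x \<notin> \<Gamma>B" "y \<notin> \<Gamma>B" "snd x = \<tau>" "snd y = \<rho>"
     "typed (\<Gamma>B \<union> {x, y}) (opn2 0 (FVar x) (FVar y) r) \<sigma>"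
    using tens_inv2[OF assms] by blast
  obtain \<Gamma>1 \<Gamma>2 \<Gamma>3 where g: "\<Gamma>A = \<Gamma>1 \<union> \<Gamma>2 \<union> \<Gamma>3" "\<Gamma>1 \<inter> \<Gamma>2 = {}" "(\<Gamma>1 \<union> \<Gamma>2) \<inter> \<Gamma>3 = {}"
    "finite \<Gamma>1" "typed \<Gamma>2 t \<tau>" "typed \<Gamma>3 s \<rho>"
    using tens_inv[OF h(3)] by blast
  have finG: "finite \<Gamma>" using typed_finite[OF assms] .
  have finA: "finite (\<Gamma> \<union> fv r \<union> {x, y})" using finG finite_fv by auto
  obtain x' where x': "x' \<notin> \<Gamma> \<union> fv r \<union> {x, y}" "snd x' = \<tau>"
    using fresh[OF finA] by blast
  have finB: "finite (\<Gamma> \<union> fv r \<union> {x, y, x'})" using finG finite_fv by auto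
  obtain y' where y': "y' \<notin> \<Gamma> \<union> fv r \<union> {x, y, x'}" "snd y' = \<rho>"
    using fresh[OF finB] by blast
  have fvt: "fv t \<subseteq> \<Gamma>2" "fv s \<subseteq> \<Gamma>3" using g typed_fv by blast+
  have t1: "typed (\<Gamma>B \<union> {x', y'}) (opn2 0 (FVar x') (FVar y') r) \<sigma>"
    apply (rule rename2[OF h(11)])
    using h x' y' by auto
  have d1: "((\<Gamma>B \<union> {x', y'}) - {y'}) \<inter> \<Gamma>3 = {}" using h g x' y' by auto
  have ts: "typed \<Gamma>3 s (snd y')" using g y' by simp
  have t2: "typed (((\<Gamma>B \<union> {x', y'}) - {y'}) \<union> \<Gamma>3) (subst y' s (opn2 0 (FVar x') (FVar y') r)) \<sigma>"
    by (rule subst_typed[OF t1 ts d1])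
  have e1: "subst y' s (opn2 0 (FVar x') (FVar y') r) = opn2 0 (FVar x') s r"
    using y' typed_lc[OF g(6)] by (auto simp: subst_opn2 subst_id)
  have e2: "((\<Gamma>B \<union> {x', y'}) - {y'}) \<union> \<Gamma>3 = ((\<Gamma>B \<union> \<Gamma>3) \<union> {x'})" using x' y' h by auto
  have t3: "typed ((\<Gamma>B \<union> \<Gamma>3) \<union> {x'}) (opn2 0 (FVar x') s r) \<sigma>" using t2 e1 e2 by simp
  have d2: "(((\<Gamma>B \<union> \<Gamma>3) \<union> {x'}) - {x'}) \<inter> \<Gamma>2 = {}" using h g x' by auto
  have tt: "typed \<Gamma>2 t (snd x')" using g x' by simp
  have t4: "typed ((((\<Gamma>B \<union> \<Gamma>3) \<union> {x'}) - {x'}) \<union> \<Gamma>2) (subst x' t (opn2 0 (FVar x') s r)) \<sigma>"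
    by (rule subst_typed[OF t3 tt d2])
  have e3: "subst x' t (opn2 0 (FVar x') s r) = opn2 0 t s r"
  proof -
    have "x' \<notin> fv s" using fvt x' h g by auto
    then have "subst x' t s = s" by (rule subst_id)
    then show ?thesis using x' y' typed_lc[OF g(5)] by (auto simp: subst_opn2 subst_id)
  qed
  have sub: "(((\<Gamma>B \<union> \<Gamma>3) \<union> {x'}) - {x'}) \<union> \<Gamma>2 \<subseteq> \<Gamma>" using h g by auto
  show ?thesis using weaken[OF t4 finG sub] e3 by simp
qed

lemma itnil_typed:
  assumes "typed \<Gamma> (App (App (Const (NilC \<tau>)) (Brace t)) s) \<sigma>"
  shows "typed \<Gamma> s \<sigma>"
proof -
  from itnil_inv[OF assms] obtain \<Gamma>A \<Gamma>B where h: "\<Gamma> = \<Gamma>A \<union> \<Gamma>B" "typed \<Gamma>B s \<sigma>" by blast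
  have sub: "\<Gamma>B \<subseteq> \<Gamma>" using h by auto
  show ?thesis using weaken[OF h(2) typed_finite[OF assms] sub] .
qed

lemma itcons_typed:
  assumes "typed \<Gamma> (App (App (App (App (App (Const (ConsC \<tau>)) d) a) l) (Brace t)) s) \<sigma>"
  shows "typed \<Gamma> (App (App (App t d) a) (App (App l (Brace t)) s)) \<sigma>"
proof -
  obtain \<Gamma>A \<Gamma>B where h: "\<Gamma> = \<Gamma>A \<union> \<Gamma>B" "\<Gamma>A \<inter> \<Gamma>B = {}" "typed \<Gamma>B s \<sigma>"
     "typed \<Gamma>A (App (App (App (Const (ConsC \<tau>)) d) a) l) (ListT \<tau>)"
     "typed {} t (Lolli Dia (Lolli \<tau> (Lolli \<sigma> \<sigma>)))"
    using itcons_inv[OF assms] by blast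
  obtain \<Gamma>1 \<Gamma>2 \<Gamma>3 \<Gamma>4 where g: "\<Gamma>A = \<Gamma>1 \<union> \<Gamma>2 \<union> \<Gamma>3 \<union> \<Gamma>4" "\<Gamma>1 \<inter> \<Gamma>2 = {}" "(\<Gamma>1 \<union> \<Gamma>2) \<inter> \<Gamma>3 = {}"
      "(\<Gamma>1 \<union> \<Gamma>2 \<union> \<Gamma>3) \<inter> \<Gamma>4 = {}"
      "finite \<Gamma>1" "typed \<Gamma>2 d Dia" "typed \<Gamma>3 a \<tau>" "typed \<Gamma>4 l (ListT \<tau>)"
    using cons_inv[OF h(4)] by blast
  have a1: "typed ({} \<union> \<Gamma>2) (App t d) (Lolli \<tau> (Lolli \<sigma> \<sigma>))"
    by (rule typed.LolliE[OF h(5) g(6)]) simp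
  have a2: "typed (\<Gamma>2 \<union> \<Gamma>3) (App (App t d) a) (Lolli \<sigma> \<sigma>)"
    apply (rule typed.LolliE[OF _ g(7)]) using a1 g by auto
  have a3: "typed \<Gamma>4 (App l (Brace t)) (Lolli \<sigma> \<sigma>)"
    by (rule typed.ListE[OF g(8) h(5)])
  have a4: "typed (\<Gamma>4 \<union> \<Gamma>B) (App (App l (Brace t)) s) \<sigma>"
    apply (rule typed.LolliE[OF a3 h(3)]) using g h by auto
  have a5: "typed ((\<Gamma>2 \<union> \<Gamma>3) \<union> (\<Gamma>4 \<union> \<Gamma>B)) (App (App (App t d) a) (App (App l (Brace t)) s)) \<sigma>"
    apply (rule typed.LolliE[OF a2 a4]) using g h by auto
  have sub: "(\<Gamma>2 \<union> \<Gamma>3) \<union> (\<Gamma>4 \<union> \<Gamma>B) \<subseteq> \<Gamma>" using g h by auto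
  show ?thesis using weaken[OF a5 typed_finite[OF assms] sub] .
qed


lemma conv_typed: "conv t t' \<Longrightarrow> typed \<Gamma> t \<sigma> \<Longrightarrow> typed \<Gamma> t' \<sigma>"
proof (induction rule: conv.induct)
  case (beta \<tau> b s)
  then show ?case using beta_typed by blast
next
  case (proj1 t s)
  then show ?case
    apply (rule AppE)
    by (auto dest!: pair_ty)
next
  case (proj0 t s)
  then show ?case
    apply (rule AppE)
    by (auto dest!: pair_ty)
next
  case (if1 t s)
  from if1 show ?case
    apply (rule AppE)
    subgoal by (auto dest!: const_ty)
    subgoal by simp
    subgoal by simp
    subgoal for \<Gamma>1 \<Gamma>2 s' r'
      using weaken[of \<Gamma>2 t \<sigma> \<Gamma>] typed_finite[OF if1] by auto
    by simp_all
next
  case (if0 t s)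
  from if0 show ?case
    apply (rule AppE)
    subgoal by (auto dest!: const_ty)
    subgoal by simp
    subgoal by simp
    subgoal for \<Gamma>1 \<Gamma>2 s' r'
      using weaken[of \<Gamma>2 s \<sigma> \<Gamma>] typed_finite[OF if0] by auto
    by simp_all
next
  case (tens \<tau> \<rho> t s r)
  then show ?case using tens_typed by blast
next
  case (itnil \<tau> t s)
  then show ?case using itnil_typed by blast
next
  case (itcons \<tau> l n d a t s)
  then show ?case using itcons_typed by blast
qed

lemma red_App: "red s s' \<Longrightarrow> \<exists>a b. s = App a b"
  by (induction rule: red.induct) (auto elim: conv.cases)

lemma red_typed: "red t t' \<Longrightarrow> typed \<Gamma> t \<sigma> \<Longrightarrow> typed \<Gamma> t' \<sigma>"
proof (induction arbitrary: \<Gamma> \<sigma> rule: red.induct)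
  case (1 t t')
  then show ?case using conv_typed by blast
next
  case (2 t t' s)
  from 2(3) show ?case
    apply (rule AppE)
    subgoal for \<Gamma>1 \<tau> \<Gamma>2 using 2(2) typed.LolliE by blast
    subgoal for \<rho> using 2(2) typed.WithE1 by blast
    subgoal for \<tau> using 2(2) typed.WithE0 by blast
    subgoal for \<Gamma>1 \<Gamma>2 s1 r using 2(2) typed.BoolE by blast
    subgoal for \<Gamma>1 x s1 y \<Gamma>2 using 2(2)[of \<Gamma>1] typed.TensorE[of \<Gamma>1 t' "snd x" "snd y" x s1 y \<Gamma>2 \<sigma>] by simp
    subgoal for \<tau> h \<rho> using 2(2) typed.ListE by blast
    done
next
  case (3 s s' t)
  obtain a b where ab: "s = App a b" using red_App[OF 3(1)] by blast
  from 3(3) show ?case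
    apply (rule AppE)
    subgoal for \<Gamma>1 \<tau> \<Gamma>2 using 3(2) typed.LolliE by blast
    using ab by simp_all
qed


lemma red_fv: "red t t' \<Longrightarrow> fv t' \<subseteq> fv t"
proof (induction rule: red.induct)
  case (1 t t')
  then show ?case
  proof (cases rule: conv.cases)
    case (beta \<tau> b s)
    then show ?thesis using fv_opn[of 0 s b] by auto
  next
    case (tens \<tau> \<rho> t s r)
    then show ?thesis using fv_opn2[of 0 t s r] by auto
  qed auto
qed auto

fun occ :: "nat \<Rightarrow> trm \<Rightarrow> nat" where
  "occ k (FVar x) = 0"
| "occ k (BVar i) = (if i = k then 1 else 0)"
| "occ k (Const c) = 0"
| "occ k (Lam \<tau> b) = occ (Suc k) b"
| "occ k (Pair t s) = max (occ k t) (occ k s)"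
| "occ k (App t s) = occ k t + occ k s"
| "occ k (Brace t) = 2 * occ k t"

fun focc :: "var \<Rightarrow> trm \<Rightarrow> nat" where
  "focc x (FVar z) = (if z = x then 1 else 0)"
| "focc x (BVar i) = 0"
| "focc x (Const c) = 0"
| "focc x (Lam \<tau> b) = focc x b"
| "focc x (Pair t s) = max (focc x t) (focc x s)"
| "focc x (App t s) = focc x t + focc x s"
| "focc x (Brace t) = 2 * focc x t"

lemma focc_zero: "x \<notin> fv t \<Longrightarrow> focc x t = 0"
  by (induction t) auto
lemma focc_opn_fresh: "x \<notin> fv b \<Longrightarrow> focc x (opn k (FVar x) b) = occ k b"
  by (induction b arbitrary: k) auto
lemma focc_opn2_x: "x \<notin> fv b \<Longrightarrow> x \<noteq> y \<Longrightarrow> focc x (opn2 k (FVar x) (FVar y) b) = occ (Suc k) b"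
  by (induction b arbitrary: k) auto
lemma focc_opn2_y: "y \<notin> fv b \<Longrightarrow> x \<noteq> y \<Longrightarrow> focc y (opn2 k (FVar x) (FVar y) b) = occ k b"
  by (induction b arbitrary: k) auto
lemma focc_opn_ge: "focc z b \<le> focc z (opn k u b)"
proof (induction b arbitrary: k)
  case (Pair b1 b2)
  have h1: "focc z b1 \<le> focc z (opn k u b1)" by (rule Pair.IH(1))
  have h2: "focc z b2 \<le> focc z (opn k u b2)" by (rule Pair.IH(2))
  show ?case using max.mono[OF h1 h2] by simp
next
  case (App b1 b2)
  have h1: "focc z b1 \<le> focc z (opn k u b1)" by (rule App.IH(1))
  have h2: "focc z b2 \<le> focc z (opn k u b2)" by (rule App.IH(2))
  show ?case using add_mono[OF h1 h2] by simp
qed auto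

lemma focc_opn2_ge: "focc z b \<le> focc z (opn2 k u v b)"
proof (induction b arbitrary: k)
  case (Pair b1 b2)
  have h1: "focc z b1 \<le> focc z (opn2 k u v b1)" by (rule Pair.IH(1))
  have h2: "focc z b2 \<le> focc z (opn2 k u v b2)" by (rule Pair.IH(2))
  show ?case using max.mono[OF h1 h2] by simp
next
  case (App b1 b2)
  have h1: "focc z b1 \<le> focc z (opn2 k u v b1)" by (rule App.IH(1))
  have h2: "focc z b2 \<le> focc z (opn2 k u v b2)" by (rule App.IH(2))
  show ?case using add_mono[OF h1 h2] by simp
qed auto

lemma typed_lin: "typed \<Gamma> t \<tau> \<Longrightarrow> focc z t \<le> 1"
proof (induction rule: typed.induct)
  case (LolliI x b \<tau> \<Gamma> \<rho>)
  then show ?case using focc_opn_ge[of z b 0 "FVar x"] by simp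
next
  case (LolliE \<Gamma>1 t \<tau> \<rho> \<Gamma>2 s)
  show ?case
  proof (cases "z \<in> \<Gamma>1")
    case True
    then have "z \<notin> fv s" using typed_fv[OF LolliE.hyps(2)] LolliE.hyps(3) by blast
    then have "focc z s = 0" by (rule focc_zero)
    then show ?thesis using LolliE.IH(1) by simp
  next
    case False
    then have "z \<notin> fv t" using typed_fv[OF LolliE.hyps(1)] by blast
    then have "focc z t = 0" by (rule focc_zero)
    then show ?thesis using LolliE.IH(2) by simp
  qed
next
  case (BoolE \<Gamma>1 t \<Gamma>2 s \<tau> r)
  show ?case
  proof (cases "z \<in> \<Gamma>1")
    case True
    then have "z \<notin> fv s" "z \<notin> fv r" using typed_fv[OF BoolE.hyps(2)] typed_fv[OF BoolE.hyps(3)] BoolE.hyps(4) by blast+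
    then have "focc z s = 0" "focc z r = 0" by (simp_all add: focc_zero)
    then show ?thesis using BoolE.IH(1) by simp
  next
    case False
    then have "z \<notin> fv t" using typed_fv[OF BoolE.hyps(1)] by blast
    then have "focc z t = 0" by (rule focc_zero)
    then show ?thesis using BoolE.IH(2) BoolE.IH(3) by simp
  qed
next
  case (TensorE \<Gamma>1 t \<tau> \<rho> x s y \<Gamma>2 \<sigma>)
  have fs: "fv s \<subseteq> \<Gamma>2"
    using TensorE.hyps(2) TensorE.hyps(3) typed_fv[OF TensorE.hyps(9)] fv_opn2_sup[of s 0 "FVar x" "FVar y"] by blast
  have s1: "focc z s \<le> 1" using focc_opn2_ge[of z s 0 "FVar x" "FVar y"] TensorE.IH(2) by simp
  show ?case
  proof (cases "z \<in> \<Gamma>1")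
    case True
    then have "z \<notin> fv s" using fs TensorE.hyps(10) by blast
    then have "focc z s = 0" by (rule focc_zero)
    then show ?thesis using TensorE.IH(1) by simp
  next
    case False
    then have "z \<notin> fv t" using typed_fv[OF TensorE.hyps(1)] by blast
    then have "focc z t = 0" by (rule focc_zero)
    then show ?thesis using s1 by simp
  qed
next
  case (ListE \<Gamma> t \<tau> s \<rho>)
  have "z \<notin> fv s" using typed_fv[OF ListE.hyps(2)] by blast
  then have "focc z s = 0" by (rule focc_zero)
  then show ?case using ListE.IH(1) by simp
qed auto

lemma lin_beta: "typed \<Gamma> (opn 0 (FVar z) b) \<rho> \<Longrightarrow> z \<notin> fv b \<Longrightarrow> occ 0 b \<le> 1"
  using typed_lin[of \<Gamma> "opn 0 (FVar z) b" \<rho> z] focc_opn_fresh by simp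

lemma lin_tens: "typed \<Gamma> (opn2 0 (FVar x) (FVar y) r) \<rho> \<Longrightarrow> x \<notin> fv r \<Longrightarrow> y \<notin> fv r \<Longrightarrow> x \<noteq> y
   \<Longrightarrow> occ 0 r \<le> 1 \<and> occ 1 r \<le> 1"
  using typed_lin[of \<Gamma> "opn2 0 (FVar x) (FVar y) r" \<rho> x] typed_lin[of \<Gamma> "opn2 0 (FVar x) (FVar y) r" \<rho> y]
    focc_opn2_x focc_opn2_y by simp

fun inh :: "ty \<Rightarrow> bool" where
  "inh Dia = False"
| "inh BoolT = True"
| "inh (Lolli a b) = (inh a \<longrightarrow> inh b)"
| "inh (Tensor a b) = (inh a \<and> inh b)"
| "inh (With a b) = (inh a \<and> inh b)"
| "inh (ListT a) = True"

lemma typed_inh: "typed \<Gamma> t \<tau> \<Longrightarrow> (\<forall>z\<in>fv t. inh (snd z)) \<Longrightarrow> inh \<tau>"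
proof (induction rule: typed.induct)
  case (Cst \<Gamma> c)
  then show ?case by (cases c) auto
next
  case (LolliI x b \<tau> \<Gamma> \<rho>)
  then show ?case using fv_opn[of 0 "FVar x" b] by auto
next
  case (TensorE \<Gamma>1 t \<tau> \<rho> x s y \<Gamma>2 \<sigma>)
  then show ?case using fv_opn2[of 0 "FVar x" "FVar y" s] by auto
qed auto

lemma dia_fv: "typed \<Gamma> d Dia \<Longrightarrow> fv d \<noteq> {}"
  using typed_inh by fastforce

lemma list_len: "is_list \<tau> L n \<Longrightarrow> typed \<Gamma> L \<sigma> \<Longrightarrow> n \<le> card (fv L)"
proof (induction arbitrary: \<Gamma> \<sigma> rule: is_list.induct)
  case (1 \<tau>)
  then show ?case by simp
next
  case (2 \<tau> l n d a)
  obtain \<Gamma>1 \<Gamma>2 \<Gamma>3 \<Gamma>4 where g: "\<Gamma> = \<Gamma>1 \<union> \<Gamma>2 \<union> \<Gamma>3 \<union> \<Gamma>4" "\<Gamma>1 \<inter> \<Gamma>2 = {}" "(\<Gamma>1 \<union> \<Gamma>2) \<inter> \<Gamma>3 = {}"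
      "(\<Gamma>1 \<union> \<Gamma>2 \<union> \<Gamma>3) \<inter> \<Gamma>4 = {}"
      "finite \<Gamma>1" "typed \<Gamma>2 d Dia" "typed \<Gamma>3 a \<tau>" "typed \<Gamma>4 l (ListT \<tau>)"
    using cons_inv[OF 2(3)] by blast
  have n: "n \<le> card (fv l)" using 2(2)[OF g(8)] .
  have d: "fv d \<noteq> {}" using dia_fv[OF g(6)] .
  have disj: "fv d \<inter> fv l = {}" using typed_fv[OF g(6)] typed_fv[OF g(8)] g(4) by blast
  have "card (fv d \<union> fv l) = card (fv d) + card (fv l)"
    using card_Un_disjoint[OF finite_fv finite_fv disj] .
  moreover have "card (fv d) \<ge> 1" using d finite_fv[of d] by (simp add: Suc_le_eq card_gt_0_iff)
  moreover have "card (fv d \<union> fv l) \<le> card (fv (App (App (App (Const (ConsC \<tau>)) d) a) l))"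
    by (rule card_mono[OF finite_fv]) auto
  ultimately show ?case using n by simp
qed


definition cc :: "nat \<Rightarrow> trm \<Rightarrow> nat" where
  "cc m t = (if \<exists>\<tau> n. is_list \<tau> t n then min (THE n. \<exists>\<tau>. is_list \<tau> t n) m else m)"

lemma pi_brace: "pi (App t (Brace h)) m = pi t m + cc m t * (pi h m + len h)"
proof (cases "\<exists>\<tau> n. is_list \<tau> t n")
  case True
  have "pi (App t (Brace h)) m = pi t m + min (THE n. \<exists>\<tau>. is_list \<tau> t n) m * pi h m
                  + min (THE n. \<exists>\<tau>. is_list \<tau> t n) m * len h"
    by (simp only: pi.simps if_P[OF True])
  moreover have "cc m t = min (THE n. \<exists>\<tau>. is_list \<tau> t n) m"
    by (simp only: cc_def if_P[OF True])
  ultimately show ?thesis by (simp add: algebra_simps)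
next
  case False
  have "pi (App t (Brace h)) m = pi t m + (m * pi h m + m * len h)"
    by (simp only: pi.simps if_not_P[OF False])
  moreover have "cc m t = m"
    by (simp only: cc_def if_not_P[OF False])
  ultimately show ?thesis by (simp add: algebra_simps)
qed
declare pi.simps(4)[simp del]
declare pi_brace[simp]

lemma pi_nonbrace: "(\<forall>h. s \<noteq> Brace h) \<Longrightarrow> pi (App t s) m = pi t m + pi s m"
  by (cases s) auto
lemma cc_le: "cc m t \<le> m"
  by (simp add: cc_def)
lemma pi_app_le: "pi (App t s) m \<le> pi t m + pi s m"
proof (cases "\<exists>h. s = Brace h")
  case True
  then obtain h where h: "s = Brace h" by blast
  have "cc m t * (pi h m + len h) \<le> m * (pi h m + len h)" using cc_le by (rule mult_le_mono1)
  then show ?thesis using h by (simp only: pi_brace pi.simps) (simp add: algebra_simps)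
next
  case False
  then show ?thesis by (simp add: pi_nonbrace)
qed

lemma is_list_unique: "is_list \<tau> t n \<Longrightarrow> is_list \<tau>' t n' \<Longrightarrow> n = n'"
proof (induction arbitrary: \<tau>' n' rule: is_list.induct)
  case (1 \<tau>)
  then show ?case by (cases rule: is_list.cases) auto
next
  case (2 \<tau> l n d a)
  from 2(3) show ?case by (cases rule: is_list.cases) (auto dest: 2(2))
qed

lemma the_len: "is_list \<tau> t n \<Longrightarrow> (THE n. \<exists>\<tau>. is_list \<tau> t n) = n"
  by (rule the_equality) (auto dest: is_list_unique)

lemma cc_list: "is_list \<tau> t n \<Longrightarrow> cc m t = min n m"
  unfolding cc_def using the_len by auto
lemma cc_nonlist: "\<not> (\<exists>\<tau> n. is_list \<tau> t n) \<Longrightarrow> cc m t = m"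
  unfolding cc_def by auto

lemma is_list_opn: "is_list \<tau> t n \<Longrightarrow> is_list \<tau> (opn k u t) n"
  by (induction rule: is_list.induct) (auto intro: is_list.intros)
lemma is_list_opn2: "is_list \<tau> t n \<Longrightarrow> is_list \<tau> (opn2 k u v t) n"
  by (induction rule: is_list.induct) (auto intro: is_list.intros)

lemma cc_opn: "cc m (opn k u t) \<le> cc m t"
proof (cases "\<exists>\<tau> n. is_list \<tau> t n")
  case True
  then obtain \<tau> n where "is_list \<tau> t n" by blast
  then have "is_list \<tau> (opn k u t) n" by (rule is_list_opn)
  then show ?thesis using cc_list[OF \<open>is_list \<tau> t n\<close>, of m] cc_list[of \<tau> "opn k u t" n m] by simp
next
  case False
  then show ?thesis using cc_nonlist[OF False, of m] cc_le[of m "opn k u t"] by simp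
qed
lemma cc_opn2: "cc m (opn2 k u v t) \<le> cc m t"
proof (cases "\<exists>\<tau> n. is_list \<tau> t n")
  case True
  then obtain \<tau> n where "is_list \<tau> t n" by blast
  then have "is_list \<tau> (opn2 k u v t) n" by (rule is_list_opn2)
  then show ?thesis using cc_list[OF \<open>is_list \<tau> t n\<close>, of m] cc_list[of \<tau> "opn2 k u v t" n m] by simp
next
  case False
  then show ?thesis using cc_nonlist[OF False, of m] cc_le[of m "opn2 k u v t"] by simp
qed

lemma opn_occ0: "occ k b = 0 \<Longrightarrow> opn k u b = b"
  by (induction b arbitrary: k) auto
lemma opn2_occ0: "occ k b = 0 \<Longrightarrow> occ (Suc k) b = 0 \<Longrightarrow> opn2 k u v b = b"
  by (induction b arbitrary: k) auto

lemma opn_brace: "opn k u s = Brace h \<Longrightarrow> (\<exists>h'. s = Brace h') \<or> s = BVar k"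
  by (cases s) (auto split: if_splits)
lemma opn2_brace: "opn2 k u v s = Brace h \<Longrightarrow> (\<exists>h'. s = Brace h') \<or> s = BVar k \<or> s = BVar (Suc k)"
  by (cases s) (auto split: if_splits)

lemma max_aux: "(a::nat) \<le> A + x * p \<Longrightarrow> b \<le> B + y * p \<Longrightarrow> max a b \<le> max A B + max x y * p"
proof -
  assume h: "a \<le> A + x * p" "b \<le> B + y * p"
  have "x * p \<le> max x y * p" "y * p \<le> max x y * p" by (simp_all add: mult_le_mono1)
  moreover have "A \<le> max A B" "B \<le> max A B" by simp_all
  ultimately have "a \<le> max A B + max x y * p" "b \<le> max A B + max x y * p" using h by linarith+
  then show ?thesis by simp
qed

lemma max_aux2: "(a::nat) \<le> A + x * p + x' * q \<Longrightarrow> b \<le> B + y * p + y' * q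
   \<Longrightarrow> max a b \<le> max A B + max x y * p + max x' y' * q"
proof -
  assume h: "a \<le> A + x * p + x' * q" "b \<le> B + y * p + y' * q"
  have "x * p \<le> max x y * p" "y * p \<le> max x y * p" by (simp_all add: mult_le_mono1)
  moreover have "x' * q \<le> max x' y' * q" "y' * q \<le> max x' y' * q" by (simp_all add: mult_le_mono1)
  moreover have "A \<le> max A B" "B \<le> max A B" by simp_all
  ultimately have "a \<le> max A B + max x y * p + max x' y' * q" "b \<le> max A B + max x y * p + max x' y' * q"
    using h by linarith+
  then show ?thesis by simp
qed

lemma len_opn: "len (opn k u b) \<le> len b + occ k b * len u"
proof (induction b arbitrary: k)
  case (Pair b1 b2)
  from max_aux[OF Pair.IH(1) Pair.IH(2)] show ?case by simp
next
  case (App b1 b2)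
  from add_mono[OF App.IH(1) App.IH(2)] show ?case by (simp add: algebra_simps)
qed auto

lemma len_opn2: "len (opn2 k u v b) \<le> len b + occ (Suc k) b * len u + occ k b * len v"
proof (induction b arbitrary: k)
  case (Pair b1 b2)
  from max_aux2[OF Pair.IH(1) Pair.IH(2)] show ?case by simp
next
  case (App b1 b2)
  from add_mono[OF App.IH(1) App.IH(2)] show ?case by (simp add: algebra_simps)
qed auto


lemma pi_opn: "occ k b \<le> 1 \<Longrightarrow> pi (opn k u b) m \<le> pi b m + occ k b * pi u m"
proof (induction b arbitrary: k)
  case (Lam \<tau> b)
  then show ?case by simp
next
  case (Pair b1 b2)
  have "occ k b1 \<le> 1" "occ k b2 \<le> 1" using Pair.prems by simp_all
  from max_aux[OF Pair.IH(1)[OF this(1)] Pair.IH(2)[OF this(2)]] show ?case by simp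
next
  case (Brace h)
  then have "occ k h = 0" by simp
  then show ?case by (simp add: opn_occ0)
next
  case (App t s)
  have o: "occ k t \<le> 1" "occ k s \<le> 1" using App.prems by simp_all
  have IHt: "pi (opn k u t) m \<le> pi t m + occ k t * pi u m" by (rule App.IH(1)[OF o(1)])
  consider (br) h where "s = Brace h" | (bv) "s = BVar k" | (other) "\<forall>h. s \<noteq> Brace h" "s \<noteq> BVar k"
    by blast
  then show ?case
  proof cases
    case br
    then have "occ k h = 0" using App.prems by simp
    then have e: "opn k u s = Brace h" using br by (simp add: opn_occ0)
    have mle: "cc m (opn k u t) * (pi h m + len h) \<le> cc m t * (pi h m + len h)"
      using cc_opn by (rule mult_le_mono1)
    have L: "pi (opn k u (App t s)) m = pi (opn k u t) m + cc m (opn k u t) * (pi h m + len h)"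
      using e by simp
    have Rr: "pi (App t s) m + occ k (App t s) * pi u m = pi t m + cc m t * (pi h m + len h) + occ k t * pi u m"
      using br \<open>occ k h = 0\<close> by simp
    show ?thesis using L Rr IHt mle by linarith
  next
    case bv
    then have "occ k t = 0" using App.prems by simp
    then have "opn k u t = t" by (rule opn_occ0)
    then have "pi (opn k u (App t s)) m \<le> pi t m + pi u m" using bv pi_app_le by simp
    moreover have "pi (App t s) m = pi t m" using bv by simp
    moreover have "occ k (App t s) = 1" using bv \<open>occ k t = 0\<close> by simp
    ultimately show ?thesis by simp
  next
    case other
    have nb: "\<forall>h. opn k u s \<noteq> Brace h" using other opn_brace by blast
    have IHs: "pi (opn k u s) m \<le> pi s m + occ k s * pi u m" by (rule App.IH(2)[OF o(2)])
    have "pi (opn k u (App t s)) m = pi (opn k u t) m + pi (opn k u s) m"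
      using nb by (simp add: pi_nonbrace)
    moreover have "pi (App t s) m = pi t m + pi s m" using other by (simp add: pi_nonbrace)
    ultimately show ?thesis using IHt IHs by (simp add: algebra_simps)
  qed
qed auto

lemma pi_opn2: "occ k b \<le> 1 \<Longrightarrow> occ (Suc k) b \<le> 1 \<Longrightarrow>
   pi (opn2 k u v b) m \<le> pi b m + occ (Suc k) b * pi u m + occ k b * pi v m"
proof (induction b arbitrary: k)
  case (Lam \<tau> b)
  then show ?case by simp
next
  case (Pair b1 b2)
  have "occ k b1 \<le> 1" "occ k b2 \<le> 1" "occ (Suc k) b1 \<le> 1" "occ (Suc k) b2 \<le> 1"
    using Pair.prems by simp_all
  from max_aux2[OF Pair.IH(1)[OF this(1,3)] Pair.IH(2)[OF this(2,4)]] show ?case by simp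
next
  case (Brace h)
  then have "occ k h = 0" "occ (Suc k) h = 0" by simp_all
  then show ?case by (simp add: opn2_occ0)
next
  case (App t s)
  have o: "occ k t \<le> 1" "occ k s \<le> 1" "occ (Suc k) t \<le> 1" "occ (Suc k) s \<le> 1"
    using App.prems by simp_all
  have IHt: "pi (opn2 k u v t) m \<le> pi t m + occ (Suc k) t * pi u m + occ k t * pi v m"
    by (rule App.IH(1)[OF o(1) o(3)])
  consider (br) h where "s = Brace h" | (bv) "s = BVar k" | (bu) "s = BVar (Suc k)"
    | (other) "\<forall>h. s \<noteq> Brace h" "s \<noteq> BVar k" "s \<noteq> BVar (Suc k)"
    by blast
  then show ?case
  proof cases
    case br
    then have "occ k h = 0" "occ (Suc k) h = 0" using App.prems by simp_all
    then have e: "opn2 k u v s = Brace h" using br by (simp add: opn2_occ0)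
    have mle: "cc m (opn2 k u v t) * (pi h m + len h) \<le> cc m t * (pi h m + len h)"
      using cc_opn2 by (rule mult_le_mono1)
    have L: "pi (opn2 k u v (App t s)) m = pi (opn2 k u v t) m + cc m (opn2 k u v t) * (pi h m + len h)"
      using e by simp
    have Rr: "pi (App t s) m + occ (Suc k) (App t s) * pi u m + occ k (App t s) * pi v m
       = pi t m + cc m t * (pi h m + len h) + occ (Suc k) t * pi u m + occ k t * pi v m"
      using br \<open>occ k h = 0\<close> \<open>occ (Suc k) h = 0\<close> by simp
    show ?thesis using L Rr IHt mle by linarith
  next
    case bv
    have "pi (opn2 k u v (App t s)) m \<le> pi (opn2 k u v t) m + pi v m" using bv pi_app_le by simp
    moreover have "pi (App t s) m = pi t m" using bv by simp
    ultimately show ?thesis using IHt bv by (simp add: algebra_simps)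
  next
    case bu
    have "pi (opn2 k u v (App t s)) m \<le> pi (opn2 k u v t) m + pi u m" using bu pi_app_le by simp
    moreover have "pi (App t s) m = pi t m" using bu by simp
    ultimately show ?thesis using IHt bu by (simp add: algebra_simps)
  next
    case other
    have nb: "\<forall>h. opn2 k u v s \<noteq> Brace h" using other opn2_brace by blast
    have IHs: "pi (opn2 k u v s) m \<le> pi s m + occ (Suc k) s * pi u m + occ k s * pi v m"
      by (rule App.IH(2)[OF o(2) o(4)])
    have "pi (opn2 k u v (App t s)) m = pi (opn2 k u v t) m + pi (opn2 k u v s) m"
      using nb by (simp add: pi_nonbrace)
    moreover have "pi (App t s) m = pi t m + pi s m" using other by (simp add: pi_nonbrace)
    ultimately show ?thesis using IHt IHs by (simp add: algebra_simps)
  qed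
qed auto


lemma red_Const: "\<not> red (Const c) t'"
proof
  assume "red (Const c) t'"
  then show False by (cases rule: red.cases) (auto elim: conv.cases)
qed

lemma red_cons1: "red (App (Const (ConsC \<tau>)) d) X \<Longrightarrow> \<exists>d'. X = App (Const (ConsC \<tau>)) d'"
  by (erule red.cases) (auto elim: conv.cases simp: red_Const)

lemma red_cons2: "red (App (App (Const (ConsC \<tau>)) d) a) X \<Longrightarrow> \<exists>d' a'. X = App (App (Const (ConsC \<tau>)) d') a'"
  by (erule red.cases) (auto elim: conv.cases dest: red_cons1)

lemma red_list: "is_list \<tau> t n \<Longrightarrow> red t t' \<Longrightarrow> is_list \<tau> t' n"
proof (induction arbitrary: t' rule: is_list.induct)
  case (1 \<tau>)
  then show ?case using red_Const by blast
next
  case (2 \<tau> l n d a)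
  from 2(3) show ?case
  proof (cases rule: red.cases)
    case 1
    then show ?thesis by (auto elim: conv.cases)
  next
    case (2 t'')
    then obtain d' a' where "t'' = App (App (Const (ConsC \<tau>)) d') a'" using red_cons2 by blast
    then show ?thesis using 2 \<open>is_list \<tau> l n\<close> by (auto intro: is_list.intros)
  next
    case (3 s'')
    then show ?thesis using 2(2) by (auto intro: is_list.intros)
  qed
qed

lemma cc_red: "red t t' \<Longrightarrow> cc m t' \<le> cc m t"
proof (cases "\<exists>\<tau> n. is_list \<tau> t n")
  case True
  assume r: "red t t'"
  from True obtain \<tau> n where l: "is_list \<tau> t n" by blast
  then have "is_list \<tau> t' n" using red_list r by blast
  then show ?thesis using cc_list[OF l, of m] cc_list[of \<tau> t' n m] by simp
next
  case False
  then show ?thesis using cc_nonlist[OF False, of m] cc_le[of m t'] by simp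
qed

lemma pi_nonlist: "\<not> (\<exists>\<tau> n. is_list \<tau> t n) \<Longrightarrow> pi (App t s) m = pi t m + pi s m"
  by (cases "\<exists>h. s = Brace h") (auto simp: cc_nonlist pi_nonbrace algebra_simps)

lemma nl_const: "\<not> (\<exists>\<tau> n. is_list \<tau> (App (Const c) d) n)"
  by (auto elim: is_list.cases)
lemma nl_const2: "\<not> (\<exists>\<tau> n. is_list \<tau> (App (App (Const c) d) a) n)"
  by (auto elim: is_list.cases)
lemma nl_const0: "\<not> (\<exists>\<tau> n. is_list \<tau> (Const (ConsC \<tau>') ) n)"
  by (auto elim: is_list.cases)
lemma nl_nilbrace: "\<not> (\<exists>\<tau> n. is_list \<tau> (App (Const (NilC \<tau>')) (Brace h)) n)"
  by (auto elim: is_list.cases)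
lemma nl_consbrace: "\<not> (\<exists>\<tau> n. is_list \<tau> (App (App (App (App (Const c) d) a) l) (Brace h)) n)"
  by (auto elim: is_list.cases)

lemma typed_nonbrace: "typed \<Gamma> s \<sigma> \<Longrightarrow> \<forall>h. s \<noteq> Brace h"
  using no_brace by blast

lemma occ_mult: "oc \<le> (1::nat) \<Longrightarrow> oc * x \<le> x"
  by (cases oc) auto


lemma dec_beta:
  assumes "typed \<Gamma> (App (Lam \<tau> b) s) \<sigma>"
  shows "pi (opn 0 s b) N + len (opn 0 s b) < pi (App (Lam \<tau> b) s) N + len (App (Lam \<tau> b) s)"
proof -
  from beta_inv[OF assms] obtain \<Gamma>1 \<Gamma>2 z where h: "typed \<Gamma>2 s \<tau>" "z \<notin> fv b"
    "typed (\<Gamma>1 \<union> {z}) (opn 0 (FVar z) b) \<sigma>"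
    by blast
  have o: "occ 0 b \<le> 1" using lin_beta[OF h(3) h(2)] .
  have p1: "pi (opn 0 s b) N \<le> pi b N + pi s N"
    using pi_opn[OF o, of s N] occ_mult[OF o, of "pi s N"] by linarith
  have l1: "len (opn 0 s b) \<le> len b + len s"
    using len_opn[of 0 s b] occ_mult[OF o, of "len s"] by linarith
  have "pi (App (Lam \<tau> b) s) N = pi b N + pi s N"
    using typed_nonbrace[OF h(1)] by (simp add: pi_nonbrace)
  then show ?thesis using p1 l1 by simp
qed

lemma dec_tens:
  assumes "typed \<Gamma> (App (App (App (Const (TensC \<tau> \<rho>)) t) s) (Lam \<tau> (Lam \<rho> r))) \<sigma>"
  shows "pi (opn2 0 t s r) N + len (opn2 0 t s r)
     < pi (App (App (App (Const (TensC \<tau> \<rho>)) t) s) (Lam \<tau> (Lam \<rho> r))) N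
       + len (App (App (App (Const (TensC \<tau> \<rho>)) t) s) (Lam \<tau> (Lam \<rho> r)))"
proof -
  from tens_inv2[OF assms] obtain \<Gamma>A \<Gamma>B x y where h:
     "typed \<Gamma>A (App (App (Const (TensC \<tau> \<rho>)) t) s) (Tensor \<tau> \<rho>)"
     "x \<notin> fv r" "y \<notin> fv r" "x \<noteq> y"
     "typed (\<Gamma>B \<union> {x, y}) (opn2 0 (FVar x) (FVar y) r) \<sigma>"
    by blast
  obtain \<Gamma>2 \<Gamma>3 where g: "typed \<Gamma>2 t \<tau>" "typed \<Gamma>3 s \<rho>"
    using tens_inv[OF h(1)] by blast
  have o: "occ 0 r \<le> 1" "occ (Suc 0) r \<le> 1" using lin_tens[OF h(5) h(2) h(3) h(4)] by simp_all
  have A: "pi (opn2 0 t s r) N \<le> pi r N + occ (Suc 0) r * pi t N + occ 0 r * pi s N"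
    by (rule pi_opn2[OF o(1) o(2)])
  have p1: "pi (opn2 0 t s r) N \<le> pi r N + pi t N + pi s N"
    using A occ_mult[OF o(1), of "pi s N"] occ_mult[OF o(2), of "pi t N"] by linarith
  have l1: "len (opn2 0 t s r) \<le> len r + len t + len s"
    using len_opn2[of 0 t s r] occ_mult[OF o(1), of "len s"] occ_mult[OF o(2), of "len t"]
    by linarith
  have "pi (App (App (App (Const (TensC \<tau> \<rho>)) t) s) (Lam \<tau> (Lam \<rho> r))) N = pi t N + pi s N + pi r N"
    using typed_nonbrace[OF g(1)] typed_nonbrace[OF g(2)] by (simp add: pi_nonbrace)
  then show ?thesis using p1 l1 by simp
qed

lemma dec_itcons:
  assumes "typed \<Gamma> (App (App (App (App (App (Const (ConsC \<tau>)) d) a) l) (Brace h)) s) \<sigma>"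
    and "card (fv (App (App (App (App (App (Const (ConsC \<tau>)) d) a) l) (Brace h)) s)) \<le> N"
    and "is_list \<tau> l n"
  shows "pi (App (App (App h d) a) (App (App l (Brace h)) s)) N + len (App (App (App h d) a) (App (App l (Brace h)) s))
     < pi (App (App (App (App (App (Const (ConsC \<tau>)) d) a) l) (Brace h)) s) N
       + len (App (App (App (App (App (Const (ConsC \<tau>)) d) a) l) (Brace h)) s)"
proof -
  define L where "L = App (App (App (Const (ConsC \<tau>)) d) a) l"
  define K where "K = pi h N + len h"
  from itcons_inv[OF assms(1)] obtain \<Gamma>A \<Gamma>B where h: "typed \<Gamma>B s \<sigma>"
     "typed \<Gamma>A L (ListT \<tau>)" unfolding L_def by blast
  have il: "is_list \<tau> L (Suc n)" unfolding L_def using assms(3) by (rule is_list.intros)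
  have "Suc n \<le> card (fv L)" by (rule list_len[OF il h(2)])
  also have "card (fv L) \<le> card (fv (App (App L (Brace h)) s))"
    by (rule card_mono[OF finite_fv]) auto
  finally have nN: "Suc n \<le> N" using assms(2) unfolding L_def by simp
  have ccL: "cc N L = Suc n" using cc_list[OF il, of N] nN by simp
  have ccl: "cc N l = n" using cc_list[OF assms(3), of N] nN by simp
  have piL: "pi L N = pi d N + pi a N + pi l N"
    unfolding L_def using nl_const0 nl_const nl_const2 by (simp add: pi_nonlist)
  have piLHS: "pi (App (App L (Brace h)) s) N = pi L N + Suc n * K + pi s N"
    using typed_nonbrace[OF h(1)] ccL unfolding K_def by (simp add: pi_nonbrace)
  have r1: "pi (App (App (App h d) a) (App (App l (Brace h)) s)) N
      \<le> pi (App (App h d) a) N + pi (App (App l (Brace h)) s) N" by (rule pi_app_le)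
  have r2: "pi (App (App h d) a) N \<le> pi (App h d) N + pi a N" by (rule pi_app_le)
  have r3: "pi (App h d) N \<le> pi h N + pi d N" by (rule pi_app_le)
  have r4: "pi (App (App l (Brace h)) s) N \<le> pi (App l (Brace h)) N + pi s N" by (rule pi_app_le)
  have r5: "pi (App l (Brace h)) N = pi l N + n * K" using ccl unfolding K_def by simp
  have sk: "Suc n * K = K + n * K" by simp
  have kk: "K = pi h N + len h" by (simp add: K_def)
  have lr: "len (App (App (App h d) a) (App (App l (Brace h)) s)) = len h + len d + len a + len l + len s"
    by simp
  have ll: "len (App (App L (Brace h)) s) = 1 + len d + len a + len l + len s"
    unfolding L_def by simp
  have "pi (App (App (App h d) a) (App (App l (Brace h)) s)) N + len (App (App (App h d) a) (App (App l (Brace h)) s))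
     < pi (App (App L (Brace h)) s) N + len (App (App L (Brace h)) s)"
    using r1 r2 r3 r4 r5 piL piLHS sk kk lr ll by linarith
  then show ?thesis unfolding L_def .
qed

lemma dec_itnil:
  "pi s N + len s < pi (App (App (Const (NilC \<tau>)) (Brace h)) s) N + len (App (App (Const (NilC \<tau>)) (Brace h)) s)"
  using nl_nilbrace[of \<tau> h] by (simp add: pi_nonlist)

lemma conv_decrease:
  "conv t t' \<Longrightarrow> typed \<Gamma> t \<sigma> \<Longrightarrow> card (fv t) \<le> N \<Longrightarrow> pi t' N + len t' < pi t N + len t"
proof (induction rule: conv.induct)
  case (beta \<tau> b s)
  then show ?case using dec_beta by blast
next
  case (tens \<tau> \<rho> t s r)
  then show ?case using dec_tens by blast
next
  case (itnil \<tau> t s)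
  then show ?case using dec_itnil by blast
next
  case (itcons \<tau> l n d a t s)
  then show ?case using dec_itcons by blast
qed auto

lemma decrease: "red t t' \<Longrightarrow> typed \<Gamma> t \<sigma> \<Longrightarrow> card (fv t) \<le> N \<Longrightarrow> pi t' N + len t' < pi t N + len t"
proof (induction arbitrary: \<Gamma> \<sigma> rule: red.induct)
  case (1 t t')
  then show ?case using conv_decrease by blast
next
  case (2 t t' s)
  obtain \<Gamma>' \<sigma>' where ty: "typed \<Gamma>' t \<sigma>'" using app_fun[OF 2(3)] by blast
  have "card (fv t) \<le> card (fv (App t s))" by (rule card_mono[OF finite_fv]) auto
  then have IH: "pi t' N + len t' < pi t N + len t" using 2(2)[OF ty] 2(4) by simp
  show ?case
  proof (cases "\<exists>h. s = Brace h")
    case True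
    then obtain h where hs: "s = Brace h" by blast
    have mle: "cc N t' * (pi h N + len h) \<le> cc N t * (pi h N + len h)"
      using cc_red[OF 2(1)] by (rule mult_le_mono1)
    have e1: "pi (App t s) N = pi t N + cc N t * (pi h N + len h)" using hs by simp
    have e2: "pi (App t' s) N = pi t' N + cc N t' * (pi h N + len h)" using hs by simp
    have e3: "len (App t s) = len t + len s" "len (App t' s) = len t' + len s" by simp_all
    show ?thesis using mle e1 e2 e3 IH by linarith
  next
    case False
    then show ?thesis using IH pi_app_le[of t' s N] by (simp add: pi_nonbrace)
  qed
next
  case (3 s s' t)
  obtain a b where ab: "s = App a b" using red_App[OF 3(1)] by blast
  obtain \<Gamma>1 \<Gamma>2 \<sigma>' where ty: "typed \<Gamma>2 s \<sigma>'" using app_arg_app[of \<Gamma> t a b \<sigma>] 3(3) ab by blast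
  have "card (fv s) \<le> card (fv (App t s))" by (rule card_mono[OF finite_fv]) auto
  then have IH: "pi s' N + len s' < pi s N + len s" using 3(2)[OF ty] 3(4) by simp
  have "pi (App t s) N = pi t N + pi s N" using ab by simp
  then show ?case using IH pi_app_le[of t s' N] by simp
qed

theorem theorem4p8:
  assumes "typed \<Gamma> t \<tau>"
  shows "(\<forall>N t'. card (fv t) \<le> N \<longrightarrow> red t t' \<longrightarrow>
            pi t N + len t > pi t' N + len t')
       \<and> (\<forall>(k::nat) (f::nat \<Rightarrow> trm). f 0 = t \<longrightarrow> (\<forall>i<k. red (f i) (f (Suc i))) \<longrightarrow>
            k \<le> pi t (card (fv t)) + len t)"
proof (intro conjI allI impI)
  fix N t' assume "card (fv t) \<le> N" "red t t'"
  then show "pi t N + len t > pi t' N + len t'" using decrease assms by blast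
next
  fix k :: nat and f :: "nat \<Rightarrow> trm"
  assume f0: "f 0 = t" and steps: "\<forall>i<k. red (f i) (f (Suc i))"
  define N where "N = card (fv t)"
  have inv: "i \<le> k \<Longrightarrow> typed \<Gamma> (f i) \<tau> \<and> fv (f i) \<subseteq> fv t \<and> pi (f i) N + len (f i) + i \<le> pi t N + len t"
    for i
  proof (induction i)
    case 0
    then show ?case using f0 assms by simp
  next
    case (Suc i)
    then have IH: "typed \<Gamma> (f i) \<tau>" "fv (f i) \<subseteq> fv t" "pi (f i) N + len (f i) + i \<le> pi t N + len t"
      by auto
    have r: "red (f i) (f (Suc i))" using steps Suc.prems by simp
    have c: "card (fv (f i)) \<le> N" unfolding N_def using card_mono[OF finite_fv IH(2)] .
    have "pi (f (Suc i)) N + len (f (Suc i)) < pi (f i) N + len (f i)" using decrease[OF r IH(1) c] .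
    moreover have "typed \<Gamma> (f (Suc i)) \<tau>" using red_typed[OF r IH(1)] .
    moreover have "fv (f (Suc i)) \<subseteq> fv t" using red_fv[OF r] IH(2) by blast
    ultimately show ?case using IH(3) by simp
  qed
  from inv[of k] show "k \<le> pi t (card (fv t)) + len t" unfolding N_def by simp
qed

end
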